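(* Let $G$ be a finite simple graph and $e\in E(G)$. Then \[\tau_G=\tau_{G\setminus e}-(x-1)\,\tau_{G/e},\] where $G\setminus e$ is $G$ with $e$ deleted and $G/e$ is the (simple, unweighted) graph obtained by contracting $e$, removing any loops and multiple edges.
   Context: $X_G=\sum_\kappa\prod_v x_{\kappa(v)}$ over proper colourings $\kappa:V(G)\to\{1,2,\dots\}$. $P_\lambda$ is the disjoint union of paths with $\lambda_1,\dots,\lambda_{\ell(\lambda)}$ vertices; $\{X_{P_\lambda}\}$ is a basis of the symmetric functions over $\mathbb{Q}$. The tree polynomial is $\tau_G(x)=\sum_\lambda a_\lambda x^{\ell(\lambda)}$ where $X_G=\sum_\lambda a_\lambda X_{P_\lambda}$. *)

theory Defs
  imports Main "HOL-Computational_Algebra.Polynomial"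
begin

definition simple_graph :: "'a set \<Rightarrow> 'a set set \<Rightarrow> bool" where
  "simple_graph V E \<longleftrightarrow> finite V \<and> (\<forall>e\<in>E. e \<subseteq> V \<and> card e = 2)"

definition proper_colourings :: "'a set \<Rightarrow> 'a set set \<Rightarrow> ('a \<Rightarrow> nat) set" where
  "proper_colourings V E =
     {\<kappa>. (\<forall>x\<in>V. 1 \<le> \<kappa> x) \<and> (\<forall>x. x \<notin> V \<longrightarrow> \<kappa> x = 0) \<and>
          (\<forall>e\<in>E. \<forall>x\<in>e. \<forall>y\<in>e. x \<noteq> y \<longrightarrow> \<kappa> x \<noteq> \<kappa> y)}"

text \<open>Chromatic symmetric function X_G, as a formal power series in the variables
x_1, x_2, ...: the coefficient of the monomial prod_i x_i^(alpha i) is the number of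
proper colourings with exactly alpha i vertices of colour i.  (There is no variable
x_0, so monomials with alpha 0 > 0 get coefficient 0.)\<close>

definition csf :: "'a set \<Rightarrow> 'a set set \<Rightarrow> (nat \<Rightarrow> nat) \<Rightarrow> rat" where
  "csf V E \<alpha> = of_nat (card {\<kappa> \<in> proper_colourings V E.
                          \<forall>i. card {x\<in>V. \<kappa> x = i} = \<alpha> i})"

definition partitions :: "nat \<Rightarrow> nat list set" where
  "partitions n = {p. sorted_wrt (\<ge>) p \<and> 0 \<notin> set p \<and> sum_list p = n}"

text \<open>P_lambda: disjoint union of paths with lambda_1, ..., lambda_l vertices, laid out
consecutively on vertices 0, ..., |lambda|-1; the block boundaries are the partial sums.\<close>

definition path_V :: "nat list \<Rightarrow> nat set" where
  "path_V p = {0..<sum_list p}"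

definition path_E :: "nat list \<Rightarrow> nat set set" where
  "path_E p = {{i, Suc i} | i. Suc i < sum_list p \<and>
                   Suc i \<notin> {sum_list (take k p) | k. k \<le> length p}}"

text \<open>The coefficients a_lambda of X_G in the basis {X_{P_lambda}}; since X_G is homogeneous
of degree |V(G)|, only partitions of |V(G)| occur.\<close>

definition path_coeffs :: "'a set \<Rightarrow> 'a set set \<Rightarrow> nat list \<Rightarrow> rat" where
  "path_coeffs V E = (THE a. (\<forall>\<mu>. \<mu> \<notin> partitions (card V) \<longrightarrow> a \<mu> = 0) \<and>
      (\<forall>\<alpha>. csf V E \<alpha> = (\<Sum>p\<in>partitions (card V). a p * csf (path_V p) (path_E p) \<alpha>)))"

definition tree_poly :: "'a set \<Rightarrow> 'a set set \<Rightarrow> rat poly" where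
  "tree_poly V E = (\<Sum>p\<in>partitions (card V). monom (path_coeffs V E p) (length p))"

text \<open>Contraction of the edge {u,v}: v is identified with u; loops and multiple edges
disappear (edges are sets, and images of size < 2 are dropped).\<close>

definition contract_edges :: "'a set set \<Rightarrow> 'a \<Rightarrow> 'a \<Rightarrow> 'a set set" where
  "contract_edges E u v =
     {(\<lambda>x. if x = v then u else x) ` e' | e'. e' \<in> E \<and>
        card ((\<lambda>x. if x = v then u else x) ` e') = 2}"

end

theory Submission
  imports Defs "HOL-Combinatorics.Permutations" "HOL-Library.FuncSet"
begin


definition colourings :: "'a set \<Rightarrow> (nat\<Rightarrow>nat) \<Rightarrow> ('a\<Rightarrow>nat) set" where
 "colourings V \<alpha> = {\<kappa>. (\<forall>x\<in>V. 1 \<le> \<kappa> x) \<and> (\<forall>x. x \<notin> V \<longrightarrow> \<kappa> x = 0) \<and> (\<forall>i. card {x\<in>V. \<kappa> x = i} = \<alpha> i)}"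

definition ppset :: "nat list \<Rightarrow> (nat\<Rightarrow>nat) \<Rightarrow> (nat\<Rightarrow>nat) set" where
 "ppset c \<alpha> = {f. (\<forall>j<length c. 1 \<le> f j) \<and> (\<forall>j. length c \<le> j \<longrightarrow> f j = 0) \<and>
     (\<forall>i. (\<Sum>j\<in>{j. j<length c \<and> f j = i}. c!j) = \<alpha> i)}"

definition pp :: "nat list \<Rightarrow> (nat\<Rightarrow>nat) \<Rightarrow> nat" where
 "pp c \<alpha> = card (ppset c \<alpha>)"

lemma fibre_sum:
  fixes r :: nat and b :: "'a \<Rightarrow> nat"
  assumes "finite V" "\<forall>x\<in>V. b x < r"
  shows "card {x\<in>V. f (b x) = i} = (\<Sum>j\<in>{j. j<r \<and> f j = i}. card {x\<in>V. b x = j})"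
proof -
  let ?X = "{x\<in>V. f (b x) = i}" and ?J = "{j. j<r \<and> f j = i}"
  have "(\<Sum>j\<in>?J. sum (\<lambda>_. 1::nat) {x\<in>?X. b x = j}) = sum (\<lambda>_. 1) ?X"
  proof (rule sum.group)
    have "?J \<subseteq> {..<r}" by auto
    then show "finite ?J" by (rule finite_subset) simp
  qed (use assms in auto)
  moreover have "\<And>j. j\<in>?J \<Longrightarrow> {x\<in>?X. b x = j} = {x\<in>V. b x = j}" by auto
  ultimately show ?thesis by simp
qed

lemma block_count:
  assumes fin: "finite V" and bV: "b ` V = {0..<r}"
  shows "card {\<kappa>\<in>colourings V \<alpha>. \<forall>x\<in>V. \<forall>y\<in>V. b x = b y \<longrightarrow> \<kappa> x = \<kappa> y}
         = pp (map (\<lambda>j. card {x\<in>V. b x = j}) [0..<r]) \<alpha>"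
proof -
  define c where "c = map (\<lambda>j. card {x\<in>V. b x = j}) [0..<r]"
  have lc: "length c = r" by (simp add: c_def)
  have cj: "\<And>j. j < r \<Longrightarrow> c!j = card {x\<in>V. b x = j}" by (simp add: c_def)
  have bl: "\<forall>x\<in>V. b x < r" using bV by auto
  define rep where "rep j = (SOME x. x\<in>V \<and> b x = j)" for j
  have rep: "\<And>j. j < r \<Longrightarrow> rep j \<in> V \<and> b (rep j) = j"
  proof -
    fix j assume "j < r"
    then have "\<exists>x. x\<in>V \<and> b x = j" using bV by (metis atLeastLessThan_iff imageE le0)
    then show "rep j \<in> V \<and> b (rep j) = j" unfolding rep_def by (rule someI_ex)
  qed
  define F where "F f = (\<lambda>x. if x\<in>V then f (b x) else (0::nat))" for f :: "nat\<Rightarrow>nat"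
  define G where "G \<kappa> = (\<lambda>j. if j < r then \<kappa> (rep j) else (0::nat))" for \<kappa> :: "'a\<Rightarrow>nat"
  let ?K = "{\<kappa>\<in>colourings V \<alpha>. \<forall>x\<in>V. \<forall>y\<in>V. b x = b y \<longrightarrow> \<kappa> x = \<kappa> y}"
  have sumeq: "card {x\<in>V. F f x = i} = (\<Sum>j\<in>{j. j<length c \<and> f j = i}. c!j)" for f i
  proof -
    have "{x\<in>V. F f x = i} = {x\<in>V. f (b x) = i}" by (auto simp: F_def)
    then show ?thesis using fibre_sum[OF fin bl, of f i] by (simp add: lc cj)
  qed
  have "bij_betw F (ppset c \<alpha>) ?K"
  proof (rule bij_betw_byWitness[where f'=G])
    show "\<forall>f\<in>ppset c \<alpha>. G (F f) = f"
    proof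
      fix f assume f: "f \<in> ppset c \<alpha>"
      then have f0: "\<And>j. r \<le> j \<Longrightarrow> f j = 0" by (simp add: ppset_def lc)
      show "G (F f) = f"
      proof
        fix j show "G (F f) j = f j"
        proof (cases "j < r")
          case True
          then have "rep j \<in> V" "b (rep j) = j" using rep by blast+
          then show ?thesis using True by (simp add: G_def F_def)
        next
          case False then show ?thesis using f0 by (simp add: G_def)
        qed
      qed
    qed
    show "\<forall>\<kappa>\<in>?K. F (G \<kappa>) = \<kappa>"
    proof
      fix \<kappa> assume k: "\<kappa> \<in> ?K"
      show "F (G \<kappa>) = \<kappa>"
      proof
        fix x show "F (G \<kappa>) x = \<kappa> x"
        proof (cases "x \<in> V")
          case True
          then have bx: "b x < r" using bl by blast
          then have "rep (b x) \<in> V" "b (rep (b x)) = b x" using rep by blast+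
          then have "\<kappa> (rep (b x)) = \<kappa> x" using k True by blast
          then show ?thesis using True bx by (simp add: F_def G_def)
        next
          case False then show ?thesis using k by (simp add: F_def colourings_def)
        qed
      qed
    qed
    show "F ` ppset c \<alpha> \<subseteq> ?K"
    proof
      fix \<kappa> assume "\<kappa> \<in> F ` ppset c \<alpha>"
      then obtain f where f: "f \<in> ppset c \<alpha>" and k: "\<kappa> = F f" by auto
      have f1: "\<And>j. j < r \<Longrightarrow> 1 \<le> f j" using f by (simp add: ppset_def lc)
      have fs: "\<And>i. (\<Sum>j\<in>{j. j<length c \<and> f j = i}. c!j) = \<alpha> i" using f by (simp add: ppset_def)
      have "\<forall>x\<in>V. 1 \<le> \<kappa> x"
      proof
        fix x assume "x \<in> V" then show "1 \<le> \<kappa> x" using f1[of "b x"] bl by (simp add: k F_def)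
      qed
      moreover have "\<forall>x. x \<notin> V \<longrightarrow> \<kappa> x = 0" by (simp add: k F_def)
      moreover have "\<forall>i. card {x\<in>V. \<kappa> x = i} = \<alpha> i"
      proof
        fix i
        have "card {x\<in>V. \<kappa> x = i} = (\<Sum>j\<in>{j. j<length c \<and> f j = i}. c!j)"
          using sumeq[of f i] by (simp add: k)
        also have "\<dots> = \<alpha> i" by (rule fs)
        finally show "card {x\<in>V. \<kappa> x = i} = \<alpha> i" .
      qed
      moreover have "\<forall>x\<in>V. \<forall>y\<in>V. b x = b y \<longrightarrow> \<kappa> x = \<kappa> y"
        unfolding k F_def by simp
      ultimately show "\<kappa> \<in> ?K" unfolding colourings_def by blast
    qed
    show "G ` ?K \<subseteq> ppset c \<alpha>"
    proof
      fix f assume "f \<in> G ` ?K"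
      then obtain \<kappa> where k: "\<kappa> \<in> ?K" and f: "f = G \<kappa>" by auto
      have kc: "\<kappa> \<in> colourings V \<alpha>" using k by blast
      have FG: "F f = \<kappa>"
      proof
        fix x show "F f x = \<kappa> x"
        proof (cases "x \<in> V")
          case True
          then have bx: "b x < r" using bl by blast
          then have "rep (b x) \<in> V" "b (rep (b x)) = b x" using rep by blast+
          then have "\<kappa> (rep (b x)) = \<kappa> x" using k True by blast
          then show ?thesis using True bx by (simp add: F_def G_def f)
        next
          case False then show ?thesis using kc by (simp add: F_def colourings_def)
        qed
      qed
      have "\<forall>j<length c. 1 \<le> f j"
      proof (intro allI impI)
        fix j assume "j < length c"
        then have "j < r" "rep j \<in> V" using rep lc by auto
        then show "1 \<le> f j" using kc by (simp add: f G_def colourings_def)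
      qed
      moreover have "\<forall>j. length c \<le> j \<longrightarrow> f j = 0" by (simp add: f G_def lc)
      moreover have "\<forall>i. (\<Sum>j\<in>{j. j<length c \<and> f j = i}. c!j) = \<alpha> i"
      proof
        fix i
        have "(\<Sum>j\<in>{j. j<length c \<and> f j = i}. c!j) = card {x\<in>V. F f x = i}"
          using sumeq[of f i] by simp
        also have "\<dots> = \<alpha> i" using FG kc by (simp add: colourings_def)
        finally show "(\<Sum>j\<in>{j. j<length c \<and> f j = i}. c!j) = \<alpha> i" .
      qed
      ultimately show "f \<in> ppset c \<alpha>" unfolding ppset_def by blast
    qed
  qed
  then have "card (ppset c \<alpha>) = card ?K" by (rule bij_betw_same_card)
  then show ?thesis by (simp add: pp_def c_def)
qed



lemma ppset_perm_sum:
  assumes p: "p permutes {..<length d}" and c: "c = permute_list p d"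
  shows "(\<Sum>k\<in>{k. k<length d \<and> f (inv p k) = i}. d!k) = (\<Sum>j\<in>{j. j<length c \<and> f j = i}. c!j)"
proof -
  have lc: "length c = length d" using c by simp
  have "{k. k<length d \<and> f (inv p k) = i} = p ` {j. j<length c \<and> f j = i}"
  proof (rule set_eqI, rule iffI)
    fix k assume k: "k \<in> {k. k<length d \<and> f (inv p k) = i}"
    then have "inv p k < length d" using permutes_in_image[OF permutes_inv[OF p]] by auto
    then show "k \<in> p ` {j. j<length c \<and> f j = i}" using k lc permutes_inverses[OF p]
      by (auto intro!: image_eqI[where x="inv p k"])
  next
    fix k assume "k \<in> p ` {j. j<length c \<and> f j = i}"
    then obtain j where j: "j < length c" "f j = i" "k = p j" by auto
    then show "k \<in> {k. k<length d \<and> f (inv p k) = i}"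
      using permutes_in_image[OF p] permutes_inverses[OF p] lc by auto
  qed
  moreover have "inj_on p {j. j<length c \<and> f j = i}"
    using permutes_inj[OF p] by (auto intro: inj_on_subset)
  ultimately have "(\<Sum>k\<in>{k. k<length d \<and> f (inv p k) = i}. d!k) = (\<Sum>j\<in>{j. j<length c \<and> f j = i}. d!(p j))"
    by (simp add: sum.reindex)
  also have "\<dots> = (\<Sum>j\<in>{j. j<length c \<and> f j = i}. c!j)"
    by (rule sum.cong) (auto simp: c permute_list_nth[OF p])
  finally show ?thesis .
qed

lemma pp_perm:
  assumes "mset c = mset d"
  shows "pp c \<alpha> = pp d \<alpha>"
proof -
  obtain p where p: "p permutes {..<length d}" and c: "permute_list p d = c"
    using mset_eq_permutation[OF assms] by blast
  have lc: "length c = length d" using c[symmetric] by simp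
  have ip: "inv p permutes {..<length d}" by (rule permutes_inv[OF p])
  have "bij_betw (\<lambda>f. f \<circ> inv p) (ppset c \<alpha>) (ppset d \<alpha>)"
  proof (rule bij_betw_byWitness[where f'="\<lambda>g. g \<circ> p"])
    show "\<forall>f\<in>ppset c \<alpha>. f \<circ> inv p \<circ> p = f"
      using permutes_inverses[OF p] by (simp add: fun_eq_iff)
    show "\<forall>g\<in>ppset d \<alpha>. g \<circ> p \<circ> inv p = g"
      using permutes_inverses[OF p] by (simp add: fun_eq_iff)
    show "(\<lambda>f. f \<circ> inv p) ` ppset c \<alpha> \<subseteq> ppset d \<alpha>"
    proof
      fix g assume "g \<in> (\<lambda>f. f \<circ> inv p) ` ppset c \<alpha>"
      then obtain f where f: "f \<in> ppset c \<alpha>" and g: "g = f \<circ> inv p" by auto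
      have f1: "\<And>j. j < length c \<Longrightarrow> 1 \<le> f j" and f0: "\<And>j. length c \<le> j \<Longrightarrow> f j = 0"
        and fs: "\<And>i. (\<Sum>j\<in>{j. j<length c \<and> f j = i}. c!j) = \<alpha> i" using f by (simp_all add: ppset_def)
      have "\<forall>k<length d. 1 \<le> g k"
        using f1 permutes_in_image[OF ip] lc by (simp add: g)
      moreover have "\<forall>k. length d \<le> k \<longrightarrow> g k = 0"
        using f0 permutes_not_in[OF ip] lc by (simp add: g)
      moreover have "\<forall>i. (\<Sum>k\<in>{k. k<length d \<and> g k = i}. d!k) = \<alpha> i"
        using ppset_perm_sum[OF p c[symmetric], of f] fs by (simp add: g)
      ultimately show "g \<in> ppset d \<alpha>" unfolding ppset_def by blast
    qed
    show "(\<lambda>g. g \<circ> p) ` ppset d \<alpha> \<subseteq> ppset c \<alpha>"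
    proof
      fix f assume "f \<in> (\<lambda>g. g \<circ> p) ` ppset d \<alpha>"
      then obtain g where g: "g \<in> ppset d \<alpha>" and f: "f = g \<circ> p" by auto
      have g1: "\<And>j. j < length d \<Longrightarrow> 1 \<le> g j" and g0: "\<And>j. length d \<le> j \<Longrightarrow> g j = 0"
        and gs: "\<And>i. (\<Sum>j\<in>{j. j<length d \<and> g j = i}. d!j) = \<alpha> i" using g by (simp_all add: ppset_def)
      have gf: "g = f \<circ> inv p" using permutes_inverses[OF p] by (simp add: f fun_eq_iff)
      have "\<forall>k<length c. 1 \<le> f k"
        using g1 permutes_in_image[OF p] lc by (simp add: f)
      moreover have "\<forall>k. length c \<le> k \<longrightarrow> f k = 0"
        using g0 permutes_not_in[OF p] lc by (simp add: f)
      moreover have "\<forall>i. (\<Sum>k\<in>{k. k<length c \<and> f k = i}. c!k) = \<alpha> i"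
        using ppset_perm_sum[OF p c[symmetric], of f] gs gf by simp
      ultimately show "f \<in> ppset c \<alpha>" unfolding ppset_def by blast
    qed
  qed
  then show ?thesis unfolding pp_def by (rule bij_betw_same_card)
qed



definition pv :: "nat list \<Rightarrow> nat \<Rightarrow> nat" where
  "pv \<mu> i = (if 1 \<le> i \<and> i \<le> length \<mu> then \<mu>!(i-1) else 0)"

lemma ppset_memD:
  assumes "f \<in> ppset c \<alpha>"
  shows "\<And>j. j < length c \<Longrightarrow> 1 \<le> f j" "\<And>j. length c \<le> j \<Longrightarrow> f j = 0"
    "\<And>i. (\<Sum>j\<in>{j. j<length c \<and> f j = i}. c!j) = \<alpha> i"
  using assms by (simp_all add: ppset_def)

lemma ppset_le:
  assumes f: "f \<in> ppset c \<alpha>" and j: "j < length c"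
  shows "c!j \<le> \<alpha> (f j)"
proof -
  have "c!j \<le> (\<Sum>j'\<in>{j'. j'<length c \<and> f j' = f j}. c!j')"
    by (rule member_le_sum) (use j in auto)
  then show ?thesis using ppset_memD(3)[OF f, of "f j"] by simp
qed

lemma ppset_pos_val:
  assumes f: "f \<in> ppset c \<alpha>" and j: "j < length c" and c0: "0 \<notin> set c"
  shows "0 < \<alpha> (f j)"
proof -
  have "c!j \<noteq> 0" using c0 j by (metis nth_mem)
  then show ?thesis using ppset_le[OF f j] by simp
qed

lemma finite_ppset:
  assumes c0: "0 \<notin> set c" and fin: "finite {i. \<alpha> i \<noteq> 0}"
  shows "finite (ppset c \<alpha>)"
proof (rule finite_subset)
  show "ppset c \<alpha> \<subseteq> {f. \<forall>x. (x \<in> {..<length c} \<longrightarrow> f x \<in> {i. \<alpha> i \<noteq> 0}) \<and> (x \<notin> {..<length c} \<longrightarrow> f x = 0)}"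
  proof
    fix f assume f: "f \<in> ppset c \<alpha>"
    have "\<forall>x. (x \<in> {..<length c} \<longrightarrow> f x \<in> {i. \<alpha> i \<noteq> 0}) \<and> (x \<notin> {..<length c} \<longrightarrow> f x = 0)"
    proof (intro allI conjI impI)
      fix x assume "x \<in> {..<length c}"
      then have "0 < \<alpha> (f x)" using ppset_pos_val[OF f _ c0] by simp
      then show "f x \<in> {i. \<alpha> i \<noteq> 0}" by simp
    next
      fix x assume "x \<notin> {..<length c}"
      then show "f x = 0" using ppset_memD(2)[OF f] by simp
    qed
    then show "f \<in> {f. \<forall>x. (x \<in> {..<length c} \<longrightarrow> f x \<in> {i. \<alpha> i \<noteq> 0}) \<and> (x \<notin> {..<length c} \<longrightarrow> f x = 0)}" by simp
  qed
  show "finite \<dots>" by (rule finite_set_of_finite_funs) (use fin in auto)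
qed

lemma pp_pv_len:
  assumes c0: "0 \<notin> set c" and m0: "0 \<notin> set \<mu>" and nz: "pp c (pv \<mu>) \<noteq> 0"
  shows "length \<mu> \<le> length c"
proof -
  obtain f where f: "f \<in> ppset c (pv \<mu>)" using nz unfolding pp_def by (metis card.empty ex_in_conv)
  have "{1..length \<mu>} \<subseteq> f ` {..<length c}"
  proof
    fix i assume i: "i \<in> {1..length \<mu>}"
    then have "\<mu>!(i-1) \<in> set \<mu>" by (intro nth_mem) auto
    then have "\<mu>!(i-1) \<noteq> 0" using m0 by metis
    then have "pv \<mu> i \<noteq> 0" using i by (simp add: pv_def)
    then have "(\<Sum>j\<in>{j. j<length c \<and> f j = i}. c!j) \<noteq> 0" using ppset_memD(3)[OF f, of i] by simp
    then have "{j. j<length c \<and> f j = i} \<noteq> {}" by (rule contrapos_nn) auto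
    then obtain j where "j < length c" "f j = i" by blast
    then show "i \<in> f ` {..<length c}" by auto
  qed
  then have "card {1..length \<mu>} \<le> card (f ` {..<length c})" by (rule card_mono[rotated]) auto
  also have "\<dots> \<le> card {..<length c}" by (rule card_image_le) auto
  finally show ?thesis by simp
qed

lemma pp_pv_mset:
  assumes c0: "0 \<notin> set c" and m0: "0 \<notin> set \<mu>" and nz: "pp c (pv \<mu>) \<noteq> 0"
    and len: "length c = length \<mu>"
  shows "mset c = mset \<mu>"
proof -
  let ?l = "length c"
  obtain f where f: "f \<in> ppset c (pv \<mu>)" using nz unfolding pp_def by (metis card.empty ex_in_conv)
  have sup: "{1..?l} \<subseteq> f ` {..<?l}"
  proof
    fix i assume i: "i \<in> {1..?l}"
    then have "\<mu>!(i-1) \<in> set \<mu>" using len by (intro nth_mem) auto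
    then have "\<mu>!(i-1) \<noteq> 0" using m0 by metis
    then have "pv \<mu> i \<noteq> 0" using i len by (simp add: pv_def)
    then have "(\<Sum>j\<in>{j. j<?l \<and> f j = i}. c!j) \<noteq> 0" using ppset_memD(3)[OF f, of i] by simp
    then have "{j. j<?l \<and> f j = i} \<noteq> {}" by (rule contrapos_nn) auto
    then obtain j where "j < ?l" "f j = i" by blast
    then show "i \<in> f ` {..<?l}" by auto
  qed
  have sub: "f ` {..<?l} \<subseteq> {1..?l}"
  proof
    fix i assume "i \<in> f ` {..<?l}"
    then obtain j where j: "j < ?l" "i = f j" by auto
    have "0 < pv \<mu> i" using ppset_pos_val[OF f j(1) c0] j by simp
    then show "i \<in> {1..?l}" using len by (auto simp: pv_def split: if_splits)
  qed
  have img: "f ` {..<?l} = {1..?l}" using sup sub by blast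
  have inj: "inj_on f {..<?l}" by (rule eq_card_imp_inj_on) (use img in auto)
  define s where "s j = (if j < ?l then f j - 1 else j)" for j
  have sbij: "bij_betw s {..<?l} {..<?l}"
  proof -
    have "inj_on s {..<?l}"
    proof (rule inj_onI)
      fix x y assume xy: "x \<in> {..<?l}" "y \<in> {..<?l}" "s x = s y"
      then have "f x \<in> {1..?l}" "f y \<in> {1..?l}" using img by auto
      then have "f x = f y" using xy by (auto simp: s_def)
      then show "x = y" using inj xy by (auto dest: inj_onD)
    qed
    moreover have "s ` {..<?l} = {..<?l}"
    proof (rule set_eqI, rule iffI)
      fix k assume "k \<in> s ` {..<?l}"
      then obtain j where j: "j < ?l" "k = s j" by auto
      then have "f j \<in> {1..?l}" using img by blast
      then show "k \<in> {..<?l}" using j by (auto simp: s_def)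
    next
      fix k assume k: "k \<in> {..<?l}"
      then have "k+1 \<in> f ` {..<?l}" using img by auto
      then obtain j where "j < ?l" "f j = k+1" by auto
      then show "k \<in> s ` {..<?l}" by (auto simp: s_def intro!: image_eqI[where x=j])
    qed
    ultimately show ?thesis by (simp add: bij_betw_def)
  qed
  have sperm: "s permutes {..<length \<mu>}"
    using bij_imp_permutes[OF sbij] len by (simp add: s_def)
  have cj: "c!j = \<mu>!(s j)" if j: "j < ?l" for j
  proof -
    have "{j'. j'<?l \<and> f j' = f j} = {j}" using inj j by (auto dest: inj_onD)
    then have "c!j = pv \<mu> (f j)" using ppset_memD(3)[OF f, of "f j"] by simp
    moreover have "f j \<in> {1..?l}" using img j by auto
    ultimately show ?thesis using len j by (simp add: pv_def s_def)
  qed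
  have "permute_list s \<mu> = c"
    by (rule nth_equalityI) (use len cj permute_list_nth[OF sperm] in auto)
  then show ?thesis by (metis mset_permute_list[OF sperm])
qed

lemma pp_pv_self:
  assumes m0: "0 \<notin> set \<mu>"
  shows "pp \<mu> (pv \<mu>) \<noteq> 0"
proof -
  let ?l = "length \<mu>"
  define f where "f j = (if j < ?l then j+1 else 0)" for j
  have "f \<in> ppset \<mu> (pv \<mu>)"
  proof -
    have sums: "(\<Sum>j\<in>{j. j<?l \<and> f j = i}. \<mu>!j) = pv \<mu> i" for i
    proof (cases "1 \<le> i \<and> i \<le> ?l")
      case True
      then have "{j. j<?l \<and> f j = i} = {i-1}" by (auto simp: f_def)
      then show ?thesis using True by (simp add: pv_def)
    next
      case False
      then have e: "{j. j<?l \<and> f j = i} = {}" by (auto simp: f_def)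
      show ?thesis unfolding e using False by (auto simp: pv_def)
    qed
    have "\<forall>j<?l. 1 \<le> f j" "\<forall>j. ?l \<le> j \<longrightarrow> f j = 0" by (auto simp: f_def)
    then show ?thesis unfolding ppset_def using sums by blast
  qed
  moreover have "finite (ppset \<mu> (pv \<mu>))"
  proof (rule finite_ppset[OF m0])
    show "finite {i. pv \<mu> i \<noteq> 0}" by (rule finite_subset[of _ "{..length \<mu>}"]) (auto simp: pv_def split: if_splits)
  qed
  ultimately show ?thesis unfolding pp_def by (auto simp: card_eq_0_iff)
qed

lemma sorted_desc_eq:
  assumes "sorted_wrt (\<ge>) xs" "sorted_wrt (\<ge>) ys" "mset xs = mset ys"
  shows "xs = (ys::nat list)"
proof -
  have "sorted (rev xs)" "sorted (rev ys)" using assms(1,2) by (simp_all add: sorted_wrt_rev)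
  moreover have "mset (rev xs) = mset (rev ys)" using assms(3) by simp
  ultimately have "rev xs = rev ys" by (metis properties_for_sort)
  then show ?thesis by simp
qed

lemma pp_indep:
  assumes fin: "finite P" and Pp: "\<And>\<nu>. \<nu>\<in>P \<Longrightarrow> 0\<notin>set \<nu> \<and> sorted_wrt (\<ge>) \<nu>"
    and z: "\<And>\<alpha>. (\<Sum>\<nu>\<in>P. B \<nu> * of_nat (pp \<nu> \<alpha>)) = (0::rat)"
  shows "\<forall>\<nu>\<in>P. B \<nu> = 0"
proof (rule ccontr)
  assume "\<not> (\<forall>\<nu>\<in>P. B \<nu> = 0)"
  then have Zne: "{\<nu>\<in>P. B \<nu> \<noteq> 0} \<noteq> {}" by auto
  let ?Z = "{\<nu>\<in>P. B \<nu> \<noteq> 0}"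
  have Zfin: "finite ?Z" using fin by simp
  define L where "L = Max (length ` ?Z)"
  have "L \<in> length ` ?Z" unfolding L_def using Zfin Zne by (intro Max_in) auto
  then obtain \<nu>0 where n0: "\<nu>0 \<in> P" "B \<nu>0 \<noteq> 0" "length \<nu>0 = L" by auto
  have Lmax: "\<And>\<nu>. \<nu> \<in> P \<Longrightarrow> B \<nu> \<noteq> 0 \<Longrightarrow> length \<nu> \<le> L"
    unfolding L_def using Zfin by (intro Max_ge) auto
  have others: "B \<nu> * of_nat (pp \<nu> (pv \<nu>0)) = 0" if \<nu>: "\<nu> \<in> P - {\<nu>0}" for \<nu>
  proof (rule ccontr)
    assume "B \<nu> * of_nat (pp \<nu> (pv \<nu>0)) \<noteq> 0"
    then have Bn: "B \<nu> \<noteq> 0" and pn: "pp \<nu> (pv \<nu>0) \<noteq> 0" by auto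
    have "length \<nu>0 \<le> length \<nu>" using pp_pv_len[OF _ _ pn] Pp \<nu> n0 by auto
    moreover have "length \<nu> \<le> L" using Lmax Bn \<nu> by auto
    ultimately have "length \<nu> = length \<nu>0" using n0 by simp
    then have "mset \<nu> = mset \<nu>0" using pp_pv_mset[OF _ _ pn] Pp \<nu> n0 by auto
    then have "\<nu> = \<nu>0" using sorted_desc_eq Pp \<nu> n0 by blast
    then show False using \<nu> by simp
  qed
  have "(\<Sum>\<nu>\<in>P. B \<nu> * of_nat (pp \<nu> (pv \<nu>0))) = B \<nu>0 * of_nat (pp \<nu>0 (pv \<nu>0))"
    by (rule sum.remove[OF fin n0(1), THEN trans]) (simp add: others sum.neutral)
  also have "\<dots> \<noteq> 0" using n0 pp_pv_self Pp by auto
  finally show False using z by simp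
qed



definition PE :: "nat \<Rightarrow> nat set set" where
  "PE n = {{i, Suc i} | i. Suc i < n}"

definition cuts :: "nat \<Rightarrow> nat set set \<Rightarrow> nat set" where
  "cuts n S = {i. 1 \<le> i \<and> i < n \<and> {i-1, i} \<notin> S}"

definition bk :: "nat \<Rightarrow> nat set set \<Rightarrow> nat \<Rightarrow> nat" where
  "bk n S x = card {i\<in>cuts n S. i \<le> x}"

definition bl :: "nat \<Rightarrow> nat set set \<Rightarrow> nat list" where
  "bl n S = map (\<lambda>j. card {x\<in>{0..<n}. bk n S x = j}) [0..<n - card S]"

lemma finite_cuts[simp]: "finite (cuts n S)"
  by (rule finite_subset[of _ "{..<n}"]) (auto simp: cuts_def)

lemma finite_PE[simp]: "finite (PE n)"
proof -
  have "PE n = (\<lambda>i. {i, Suc i}) ` {i. Suc i < n}" by (auto simp: PE_def)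
  moreover have "finite {i. Suc i < n}" by (rule finite_subset[of _ "{..<n}"]) auto
  ultimately show ?thesis by simp
qed

lemma pair_inj: "1 \<le> i \<Longrightarrow> 1 \<le> j \<Longrightarrow> {i-1, i} = {j-1, (j::nat)} \<Longrightarrow> i = j"
  by (metis Suc_pred' diff_le_self doubleton_eq_iff le_antisym less_one not_le)

lemma card_S_cuts:
  assumes S: "S \<subseteq> PE n" and n: "1 \<le> n"
  shows "card S + card (cuts n S) = n - 1"
proof -
  have Seq: "S = (\<lambda>i. {i-1, i}) ` ({1..<n} - cuts n S)"
  proof (rule set_eqI, rule iffI)
    fix e assume e: "e \<in> S"
    then obtain m where m: "e = {m, Suc m}" "Suc m < n" using S by (auto simp: PE_def)
    then have "Suc m \<in> {1..<n} - cuts n S" using e by (auto simp: cuts_def)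
    moreover have "e = {Suc m - 1, Suc m}" using m by simp
    ultimately show "e \<in> (\<lambda>i. {i-1, i}) ` ({1..<n} - cuts n S)" by blast
  next
    fix e assume "e \<in> (\<lambda>i. {i-1, i}) ` ({1..<n} - cuts n S)"
    then show "e \<in> S" by (auto simp: cuts_def)
  qed
  have inj: "inj_on (\<lambda>i. {i-1, i}) ({1..<n} - cuts n S)"
  proof (rule inj_onI)
    fix x y assume "x \<in> {1..<n} - cuts n S" "y \<in> {1..<n} - cuts n S" "{x-1, x} = {y-1, y}"
    then show "x = y" using pair_inj[of x y] by simp
  qed
  have "card S = card ({1..<n} - cuts n S)" by (subst Seq) (rule card_image[OF inj])
  also have "\<dots> = card {1..<n} - card (cuts n S)"
    by (rule card_Diff_subset) (auto simp: cuts_def)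
  finally have "card S = (n - 1) - card (cuts n S)" by simp
  moreover have "card (cuts n S) \<le> card {1..<n}" by (rule card_mono) (auto simp: cuts_def)
  ultimately show ?thesis by simp
qed

lemma bk_mono: "x \<le> y \<Longrightarrow> bk n S x \<le> bk n S y"
  unfolding bk_def by (rule card_mono) auto

lemma bk_0: "bk n S 0 = 0"
  unfolding bk_def by (auto simp: cuts_def)

lemma bk_Suc_notcut: "Suc x \<notin> cuts n S \<Longrightarrow> bk n S (Suc x) = bk n S x"
proof -
  assume a: "Suc x \<notin> cuts n S"
  have "{i\<in>cuts n S. i \<le> Suc x} = {i\<in>cuts n S. i \<le> x}" using a by (auto simp: le_Suc_eq)
  then show ?thesis by (simp add: bk_def)
qed

lemma bk_Suc_cut: "Suc x \<in> cuts n S \<Longrightarrow> bk n S (Suc x) = Suc (bk n S x)"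
proof -
  assume a: "Suc x \<in> cuts n S"
  have "{i\<in>cuts n S. i \<le> Suc x} = insert (Suc x) {i\<in>cuts n S. i \<le> x}" using a by (auto simp: le_Suc_eq)
  moreover have "finite {i\<in>cuts n S. i \<le> x}" by simp
  ultimately show ?thesis by (simp add: bk_def)
qed

lemma bk_Suc_le: "bk n S (Suc x) \<le> Suc (bk n S x)"
  by (cases "Suc x \<in> cuts n S") (simp_all add: bk_Suc_cut bk_Suc_notcut)

lemma bk_le_cuts: "bk n S x \<le> card (cuts n S)"
  unfolding bk_def by (rule card_mono) auto

lemma bk_last: "1 \<le> n \<Longrightarrow> bk n S (n - 1) = card (cuts n S)"
proof -
  assume "1 \<le> n"
  then have "{i\<in>cuts n S. i \<le> n - 1} = cuts n S" by (auto simp: cuts_def)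
  then show ?thesis by (simp add: bk_def)
qed

lemma bk_ivt: "k \<le> bk n S y \<Longrightarrow> \<exists>x\<le>y. bk n S x = k"
proof (induction y arbitrary: k)
  case 0 then show ?case by (simp add: bk_0)
next
  case (Suc y)
  show ?case
  proof (cases "k = bk n S (Suc y)")
    case True then show ?thesis by blast
  next
    case False
    then have "k \<le> bk n S y" using Suc.prems bk_Suc_le[of n S y] by simp
    then obtain x where "x \<le> y" "bk n S x = k" using Suc.IH by blast
    then show ?thesis by (intro exI[of _ x]) simp
  qed
qed

lemma bk_image:
  assumes S: "S \<subseteq> PE n"
  shows "bk n S ` {0..<n} = {0..<n - card S}"
proof (cases "n = 0")
  case True
  then have "S = {}" using S by (auto simp: PE_def)
  then show ?thesis using True by simp
next
  case False
  then have n: "1 \<le> n" by simp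
  have r: "n - card S = Suc (card (cuts n S))" using card_S_cuts[OF S n] n by simp
  show ?thesis
  proof (rule set_eqI, rule iffI)
    fix k assume "k \<in> bk n S ` {0..<n}"
    then show "k \<in> {0..<n - card S}" using bk_le_cuts r by (auto simp: less_Suc_eq_le)
  next
    fix k assume "k \<in> {0..<n - card S}"
    then have "k \<le> bk n S (n - 1)" using r bk_last[OF n] by simp
    then obtain x where "x \<le> n - 1" "bk n S x = k" using bk_ivt by blast
    then show "k \<in> bk n S ` {0..<n}" using n by (intro image_eqI[of _ _ x]) auto
  qed
qed

lemma bk_const_iff:
  assumes S: "S \<subseteq> PE n"
  shows "(\<forall>e\<in>S. \<forall>a\<in>e. \<forall>b\<in>e. \<kappa> a = \<kappa> b) \<longleftrightarrow>
         (\<forall>x\<in>{0..<n}. \<forall>y\<in>{0..<n}. bk n S x = bk n S y \<longrightarrow> \<kappa> x = \<kappa> y)"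
proof
  assume H: "\<forall>e\<in>S. \<forall>a\<in>e. \<forall>b\<in>e. \<kappa> a = \<kappa> b"
  have step: "\<forall>d. x + d < n \<longrightarrow> bk n S (x+d) = bk n S x \<longrightarrow> \<kappa> (x+d) = \<kappa> x" for x
  proof (rule allI, induct_tac d)
    show "x + 0 < n \<longrightarrow> bk n S (x + 0) = bk n S x \<longrightarrow> \<kappa> (x + 0) = \<kappa> x" by simp
  next
    fix d assume IH: "x + d < n \<longrightarrow> bk n S (x + d) = bk n S x \<longrightarrow> \<kappa> (x + d) = \<kappa> x"
    show "x + Suc d < n \<longrightarrow> bk n S (x + Suc d) = bk n S x \<longrightarrow> \<kappa> (x + Suc d) = \<kappa> x"
    proof (intro impI)
      assume a: "x + Suc d < n" "bk n S (x + Suc d) = bk n S x"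
      have "bk n S x \<le> bk n S (x+d)" "bk n S (x+d) \<le> bk n S (x + Suc d)" by (auto intro: bk_mono)
      then have e1: "bk n S (x+d) = bk n S x" using a by simp
      have "Suc (x+d) \<notin> cuts n S"
      proof
        assume "Suc (x+d) \<in> cuts n S"
        then have "bk n S (Suc (x+d)) = Suc (bk n S (x+d))" by (rule bk_Suc_cut)
        then show False using a e1 by simp
      qed
      then have "\<not> (1 \<le> Suc (x+d) \<and> Suc (x+d) < n \<and> {Suc (x+d) - 1, Suc (x+d)} \<notin> S)"
        unfolding cuts_def by blast
      moreover have "1 \<le> Suc (x+d)" "Suc (x+d) < n" using a by auto
      ultimately have "{Suc (x+d) - 1, Suc (x+d)} \<in> S" by blast
      then have eS: "{x+d, Suc (x+d)} \<in> S" unfolding diff_Suc_1 .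
      have "\<kappa> (x+d) = \<kappa> (Suc (x+d))" using H[rule_format, OF eS, of "x+d" "Suc (x+d)"] by simp
      then show "\<kappa> (x + Suc d) = \<kappa> x" using IH a e1 by simp
    qed
  qed
  show "\<forall>x\<in>{0..<n}. \<forall>y\<in>{0..<n}. bk n S x = bk n S y \<longrightarrow> \<kappa> x = \<kappa> y"
  proof (intro ballI impI)
    fix x y assume xy: "x \<in> {0..<n}" "y \<in> {0..<n}" "bk n S x = bk n S y"
    show "\<kappa> x = \<kappa> y"
    proof (cases "x \<le> y")
      case True
      then obtain d where "y = x + d" by (metis le_add_diff_inverse)
      then show ?thesis using step[of x] xy by auto
    next
      case False
      then obtain d where "x = y + d" by (metis le_add_diff_inverse nat_le_linear)
      then show ?thesis using step[of y] xy by auto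
    qed
  qed
next
  assume H: "\<forall>x\<in>{0..<n}. \<forall>y\<in>{0..<n}. bk n S x = bk n S y \<longrightarrow> \<kappa> x = \<kappa> y"
  show "\<forall>e\<in>S. \<forall>a\<in>e. \<forall>b\<in>e. \<kappa> a = \<kappa> b"
  proof (intro ballI)
    fix e a b assume e: "e \<in> S" and ab: "a \<in> e" "b \<in> e"
    obtain m where m: "e = {m, Suc m}" "Suc m < n" using e S by (auto simp: PE_def)
    then have "Suc m \<notin> cuts n S" using e by (auto simp: cuts_def)
    then have "bk n S (Suc m) = bk n S m" by (rule bk_Suc_notcut)
    then have "\<kappa> (Suc m) = \<kappa> m" using H[rule_format, of "Suc m" m] m by simp
    then show "\<kappa> a = \<kappa> b" using ab m by auto
  qed
qed

lemma bl_props: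
  assumes S: "S \<subseteq> PE n"
  shows "length (bl n S) = n - card S" "0 \<notin> set (bl n S)" "sum_list (bl n S) = n"
proof -
  show "length (bl n S) = n - card S" by (simp add: bl_def)
  have im: "bk n S ` {0..<n} = {0..<n - card S}" by (rule bk_image[OF S])
  show "0 \<notin> set (bl n S)"
  proof
    assume "0 \<in> set (bl n S)"
    then obtain j where j0: "j \<in> set [0..<n - card S]" "0 = card {x\<in>{0..<n}. bk n S x = j}"
      unfolding bl_def set_map by blast
    then have j: "j < n - card S" "card {x\<in>{0..<n}. bk n S x = j} = 0" by simp_all
    have "j \<in> bk n S ` {0..<n}" using im j by simp
    then obtain x where "x \<in> {0..<n}" "bk n S x = j" by blast
    then have "{x\<in>{0..<n}. bk n S x = j} \<noteq> {}" by auto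
    moreover have "finite {x\<in>{0..<n}. bk n S x = j}" by simp
    ultimately show False using j(2) card_0_eq by blast
  qed
  have "sum_list (bl n S) = (\<Sum>j\<in>{0..<n - card S}. card {x\<in>{0..<n}. bk n S x = j})"
    by (simp add: bl_def sum_set_upt_conv_sum_list_nat[symmetric])
  also have "\<dots> = (\<Sum>j\<in>{0..<n - card S}. sum (\<lambda>_. 1::nat) {x\<in>{0..<n}. bk n S x = j})" by simp
  also have "\<dots> = sum (\<lambda>_. 1) {0..<n}"
    by (rule sum.group) (use im in auto)
  finally show "sum_list (bl n S) = n" by simp
qed



definition ps :: "nat list \<Rightarrow> nat \<Rightarrow> nat" where
  "ps l k = sum_list (take k l)"

lemma ps_0[simp]: "ps l 0 = 0" by (simp add: ps_def)
lemma ps_len: "ps l (length l) = sum_list l" by (simp add: ps_def)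
lemma ps_Suc: "k < length l \<Longrightarrow> ps l (Suc k) = ps l k + l!k"
  by (simp add: ps_def take_Suc_conv_app_nth)

lemma ps_strict:
  assumes l0: "0 \<notin> set l"
  shows "k < k' \<Longrightarrow> k' \<le> length l \<Longrightarrow> ps l k < ps l k'"
proof (induction k')
  case 0 then show ?case by simp
next
  case (Suc k')
  have "l!k' \<noteq> 0" using l0 Suc.prems by (metis Suc_le_eq nth_mem)
  then have "ps l k' < ps l (Suc k')" using ps_Suc[of k' l] Suc.prems by simp
  moreover have "ps l k \<le> ps l k'"
  proof (cases "k < k'")
    case True then show ?thesis using Suc.IH Suc.prems by simp
  next
    case False then have "k = k'" using Suc.prems by simp
    then show ?thesis by simp
  qed
  ultimately show ?case by simp
qed

lemma ps_mono:
  assumes l0: "0 \<notin> set l" and "k \<le> k'" "k' \<le> length l"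
  shows "ps l k \<le> ps l k'"
  using ps_strict[OF l0, of k k'] assms by (cases "k = k'") auto

lemma ps_ge:
  assumes l0: "0 \<notin> set l"
  shows "k \<le> length l \<Longrightarrow> k \<le> ps l k"
proof (induction k)
  case 0 then show ?case by simp
next
  case (Suc k)
  then show ?case using ps_strict[OF l0, of k "Suc k"] by simp
qed

lemma ps_inj:
  assumes l0: "0 \<notin> set l"
  shows "inj_on (ps l) {..length l}"
proof (rule inj_onI)
  fix x y assume "x \<in> {..length l}" "y \<in> {..length l}" "ps l x = ps l y"
  then show "x = y" using ps_strict[OF l0, of x y] ps_strict[OF l0, of y x]
    by (metis atMost_iff linorder_neqE_nat less_irrefl)
qed

lemma path_E_sub: "path_E l \<subseteq> PE (sum_list l)"
  by (auto simp: path_E_def PE_def)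

lemma path_E_mem:
  "{m, Suc m} \<in> path_E l \<longleftrightarrow> Suc m < sum_list l \<and> Suc m \<notin> {sum_list (take k l) | k. k \<le> length l}"
proof
  assume "{m, Suc m} \<in> path_E l"
  then have "\<exists>i. {m, Suc m} = {i, Suc i} \<and> Suc i < sum_list l \<and>
     Suc i \<notin> {sum_list (take k l) | k. k \<le> length l}" unfolding path_E_def by (simp only: mem_Collect_eq)
  then obtain i where i: "{m, Suc m} = {i, Suc i}" "Suc i < sum_list l"
     "Suc i \<notin> {sum_list (take k l) | k. k \<le> length l}" by (elim exE conjE) (rule that)
  have "(m = i \<and> Suc m = Suc i) \<or> (m = Suc i \<and> Suc m = i)"
    using i(1) by (simp only: doubleton_eq_iff)
  then have "m = i" by auto
  then show "Suc m < sum_list l \<and> Suc m \<notin> {sum_list (take k l) | k. k \<le> length l}" using i by simp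
next
  assume "Suc m < sum_list l \<and> Suc m \<notin> {sum_list (take k l) | k. k \<le> length l}"
  then show "{m, Suc m} \<in> path_E l" by (auto simp: path_E_def)
qed

lemma cuts_path:
  assumes l0: "0 \<notin> set l"
  shows "cuts (sum_list l) (path_E l) = ps l ` {1..<length l}"
proof (rule set_eqI, rule iffI)
  fix i assume "i \<in> cuts (sum_list l) (path_E l)"
  then have i: "1 \<le> i" "i < sum_list l" "{i-1, i} \<notin> path_E l" by (auto simp: cuts_def)
  obtain m where m: "i = Suc m" using i(1) by (metis Suc_le_D One_nat_def)
  have "{m, Suc m} \<notin> path_E l" using i(3) m by simp
  then have "Suc m \<in> {sum_list (take k l) | k. k \<le> length l}" using i(2) m path_E_mem by blast
  then obtain k where k: "k \<le> length l" "i = ps l k" using m by (auto simp: ps_def)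
  have "k \<noteq> 0"
  proof
    assume "k = 0" then show False using k i(1) by simp
  qed
  moreover have "k \<noteq> length l" using k i(2) ps_len[of l] by auto
  ultimately show "i \<in> ps l ` {1..<length l}" using k by auto
next
  fix i assume "i \<in> ps l ` {1..<length l}"
  then obtain k where k: "1 \<le> k" "k < length l" "i = ps l k" by auto
  have "1 \<le> i" using ps_ge[OF l0, of k] k by simp
  moreover have "i < sum_list l" using ps_strict[OF l0, of k "length l"] k ps_len[of l] by simp
  moreover have "{i-1, i} \<notin> path_E l"
  proof
    assume a: "{i-1, i} \<in> path_E l"
    have "i = Suc (i-1)" using \<open>1 \<le> i\<close> by simp
    then have "{i-1, Suc (i-1)} \<in> path_E l" using a by simp
    then have "Suc (i-1) \<notin> {sum_list (take k l) | k. k \<le> length l}" using path_E_mem by blast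
    then show False using k \<open>i = Suc (i-1)\<close> by (auto simp: ps_def)
  qed
  ultimately show "i \<in> cuts (sum_list l) (path_E l)" by (simp add: cuts_def)
qed

lemma bk_path:
  assumes l0: "0 \<notin> set l" and j: "j < length l" and x: "ps l j \<le> x" "x < ps l (Suc j)"
  shows "bk (sum_list l) (path_E l) x = j"
proof -
  have "{i\<in>cuts (sum_list l) (path_E l). i \<le> x} = ps l ` {1..j}"
  proof (rule set_eqI, rule iffI)
    fix i assume "i \<in> {i\<in>cuts (sum_list l) (path_E l). i \<le> x}"
    then obtain k where k: "1 \<le> k" "k < length l" "i = ps l k" "i \<le> x" using cuts_path[OF l0] by auto
    have "k < Suc j"
    proof (rule ccontr)
      assume "\<not> k < Suc j"
      then have "ps l (Suc j) \<le> ps l k" using ps_mono[OF l0, of "Suc j" k] k by simp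
      then show False using k x by simp
    qed
    then show "i \<in> ps l ` {1..j}" using k by auto
  next
    fix i assume "i \<in> ps l ` {1..j}"
    then obtain k where k: "1 \<le> k" "k \<le> j" "i = ps l k" by auto
    have "ps l k \<le> ps l j" using ps_mono[OF l0, of k j] k j by simp
    then show "i \<in> {i\<in>cuts (sum_list l) (path_E l). i \<le> x}"
      using cuts_path[OF l0] k j x by auto
  qed
  moreover have "inj_on (ps l) {1..j}" by (rule inj_on_subset[OF ps_inj[OF l0]]) (use j in auto)
  ultimately show ?thesis unfolding bk_def by (simp add: card_image)
qed

lemma block_exists:
  assumes l0: "0 \<notin> set l" and x: "x < sum_list l"
  shows "\<exists>j<length l. ps l j \<le> x \<and> x < ps l (Suc j)"
proof -
  let ?K = "{k. k \<le> length l \<and> ps l k \<le> x}"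
  have fin: "finite ?K" by (rule finite_subset[of _ "{..length l}"]) auto
  have ne: "0 \<in> ?K" by simp
  define j where "j = Max ?K"
  have jK: "j \<in> ?K" unfolding j_def using fin ne by (intro Max_in) auto
  have jl: "j < length l"
  proof (rule ccontr)
    assume "\<not> j < length l"
    then have "j = length l" using jK by simp
    then show False using jK x ps_len[of l] by simp
  qed
  have "x < ps l (Suc j)"
  proof (rule ccontr)
    assume "\<not> x < ps l (Suc j)"
    then have "Suc j \<in> ?K" using jl by simp
    then have "Suc j \<le> j" unfolding j_def by (rule Max_ge[OF fin])
    then show False by simp
  qed
  then show ?thesis using jK jl by blast
qed

lemma fibre_path:
  assumes l0: "0 \<notin> set l" and j: "j < length l"
  shows "{x\<in>{0..<sum_list l}. bk (sum_list l) (path_E l) x = j} = {ps l j..<ps l (Suc j)}"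
proof (rule set_eqI, rule iffI)
  fix x assume "x \<in> {x\<in>{0..<sum_list l}. bk (sum_list l) (path_E l) x = j}"
  then have x: "x < sum_list l" "bk (sum_list l) (path_E l) x = j" by auto
  obtain j' where j': "j' < length l" "ps l j' \<le> x" "x < ps l (Suc j')" using block_exists[OF l0 x(1)] by blast
  then have "bk (sum_list l) (path_E l) x = j'" by (intro bk_path[OF l0]) auto
  then show "x \<in> {ps l j..<ps l (Suc j)}" using x j' by simp
next
  fix x assume x: "x \<in> {ps l j..<ps l (Suc j)}"
  have "ps l (Suc j) \<le> sum_list l" using ps_mono[OF l0, of "Suc j" "length l"] j ps_len[of l] by simp
  then show "x \<in> {x\<in>{0..<sum_list l}. bk (sum_list l) (path_E l) x = j}"
    using x bk_path[OF l0 j, of x] by auto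
qed

lemma card_path_E:
  assumes l0: "0 \<notin> set l"
  shows "card (path_E l) = sum_list l - length l"
proof (cases "l = []")
  case True then show ?thesis by (simp add: path_E_def)
next
  case False
  have n: "1 \<le> sum_list l" using ps_ge[OF l0, of "length l"] False ps_len[of l]
    by (metis One_nat_def Suc_leI length_greater_0_conv dual_order.trans le_refl)
  have "card (cuts (sum_list l) (path_E l)) = length l - 1"
  proof -
    have "inj_on (ps l) {1..<length l}" by (rule inj_on_subset[OF ps_inj[OF l0]]) auto
    then have "card (ps l ` {1..<length l}) = card {1..<length l}" by (rule card_image)
    then show ?thesis using cuts_path[OF l0] by simp
  qed
  moreover have "length l \<le> sum_list l" using ps_ge[OF l0, of "length l"] ps_len[of l] by simp
  moreover have "1 \<le> length l" using False by (cases l) auto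
  ultimately show ?thesis using card_S_cuts[OF path_E_sub n] by linarith
qed

lemma bl_path:
  assumes l0: "0 \<notin> set l"
  shows "bl (sum_list l) (path_E l) = l"
proof (rule nth_equalityI)
  have "length l \<le> sum_list l" using ps_ge[OF l0, of "length l"] ps_len[of l] by simp
  then show len: "length (bl (sum_list l) (path_E l)) = length l"
    by (simp add: bl_def card_path_E[OF l0])
  fix j assume "j < length (bl (sum_list l) (path_E l))"
  then have j: "j < length l" using len by simp
  have "bl (sum_list l) (path_E l) ! j = card {x\<in>{0..<sum_list l}. bk (sum_list l) (path_E l) x = j}"
    using j len by (simp add: bl_def)
  also have "\<dots> = ps l (Suc j) - ps l j" unfolding fibre_path[OF l0 j] by simp
  also have "\<dots> = l!j" using ps_Suc[OF j] by simp
  finally show "bl (sum_list l) (path_E l) ! j = l!j" .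
qed



definition mcount :: "'a set \<Rightarrow> 'a set set \<Rightarrow> (nat \<Rightarrow> nat) \<Rightarrow> nat" where
  "mcount V S \<alpha> = card {\<kappa>\<in>colourings V \<alpha>. \<forall>e\<in>S. \<forall>a\<in>e. \<forall>b\<in>e. \<kappa> a = \<kappa> b}"

lemma finite_colourings:
  assumes fin: "finite V"
  shows "finite (colourings V \<alpha>)"
proof (cases "colourings V \<alpha> = {}")
  case True then show ?thesis by simp
next
  case False
  then obtain \<kappa>0 where k0: "\<kappa>0 \<in> colourings V \<alpha>" by blast
  have supp: "{i. \<alpha> i \<noteq> 0} \<subseteq> \<kappa>0 ` V"
  proof
    fix i assume "i \<in> {i. \<alpha> i \<noteq> 0}"
    then have "card {x\<in>V. \<kappa>0 x = i} \<noteq> 0" using k0 by (simp add: colourings_def)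
    then have "{x\<in>V. \<kappa>0 x = i} \<noteq> {}" by (metis card.empty)
    then show "i \<in> \<kappa>0 ` V" by blast
  qed
  show ?thesis
  proof (rule finite_subset)
    show "colourings V \<alpha> \<subseteq> {f. \<forall>x. (x \<in> V \<longrightarrow> f x \<in> \<kappa>0 ` V) \<and> (x \<notin> V \<longrightarrow> f x = 0)}"
    proof
      fix \<kappa> assume k: "\<kappa> \<in> colourings V \<alpha>"
      have "\<forall>x. (x \<in> V \<longrightarrow> \<kappa> x \<in> \<kappa>0 ` V) \<and> (x \<notin> V \<longrightarrow> \<kappa> x = 0)"
      proof (intro allI conjI impI)
        fix x assume x: "x \<in> V"
        have "card {y\<in>V. \<kappa> y = \<kappa> x} = \<alpha> (\<kappa> x)" using k by (simp add: colourings_def)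
        moreover have "card {y\<in>V. \<kappa> y = \<kappa> x} \<noteq> 0" using x fin by (auto simp: card_eq_0_iff)
        ultimately have "\<kappa> x \<in> {i. \<alpha> i \<noteq> 0}" by simp
        then show "\<kappa> x \<in> \<kappa>0 ` V" using supp by blast
      next
        fix x assume "x \<notin> V" then show "\<kappa> x = 0" using k by (simp add: colourings_def)
      qed
      then show "\<kappa> \<in> {f. \<forall>x. (x \<in> V \<longrightarrow> f x \<in> \<kappa>0 ` V) \<and> (x \<notin> V \<longrightarrow> f x = 0)}" by simp
    qed
    show "finite {f. \<forall>x. (x \<in> V \<longrightarrow> f x \<in> \<kappa>0 ` V) \<and> (x \<notin> V \<longrightarrow> f x = 0)}"
      by (rule finite_set_of_finite_funs) (use fin in auto)
  qed
qed

lemma subset_binom: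
  fixes y :: rat
  assumes "finite A"
  shows "(\<Sum>S\<in>Pow A. (-1)^card S * y^(card A - card S)) = (y - 1)^card A"
  using assms
proof (induction A rule: finite_induct)
  case empty then show ?case by simp
next
  case (insert a A)
  let ?f = "\<lambda>S. (-1::rat)^card S * y^(card (insert a A) - card S)"
  have disj: "Pow A \<inter> insert a ` Pow A = {}" using insert.hyps by auto
  have inj: "inj_on (insert a) (Pow A)" using insert.hyps by (auto simp: inj_on_def)
  have "(\<Sum>S\<in>Pow (insert a A). ?f S) = (\<Sum>S\<in>Pow A. ?f S) + (\<Sum>S\<in>insert a ` Pow A. ?f S)"
    unfolding Pow_insert using insert.hyps disj by (intro sum.union_disjoint) auto
  also have "(\<Sum>S\<in>Pow A. ?f S) = (\<Sum>S\<in>Pow A. y * ((-1)^card S * y^(card A - card S)))"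
  proof (rule sum.cong[OF refl])
    fix S assume "S \<in> Pow A"
    then have "card S \<le> card A" using insert.hyps by (auto intro: card_mono)
    then have "card (insert a A) - card S = Suc (card A - card S)" using insert.hyps by simp
    then show "?f S = y * ((-1)^card S * y^(card A - card S))" by simp
  qed
  also have "(\<Sum>S\<in>insert a ` Pow A. ?f S) = (\<Sum>S\<in>Pow A. ?f (insert a S))"
    by (rule sum.reindex[OF inj, unfolded comp_def])
  also have "\<dots> = (\<Sum>S\<in>Pow A. - ((-1)^card S * y^(card A - card S)))"
  proof (rule sum.cong[OF refl])
    fix S assume S: "S \<in> Pow A"
    then have fS: "finite S" "a \<notin> S" using insert.hyps by (auto intro: finite_subset)
    then have "card (insert a S) = Suc (card S)" by simp
    then show "?f (insert a S) = - ((-1)^card S * y^(card A - card S))" using insert.hyps by simp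
  qed
  finally show ?case using insert.IH insert.hyps
    by (simp add: sum_distrib_left[symmetric] sum_negf algebra_simps)
qed

lemma sum_pow_sign:
  assumes "finite A"
  shows "(\<Sum>S\<in>Pow A. (-1::rat)^card S) = (if A = {} then 1 else 0)"
  using subset_binom[OF assms, of 1] assms by (auto simp: card_gt_0_iff)

lemma inclusion_exclusion_csf:
  assumes fin: "finite V" and finE: "finite E" and c2: "\<forall>e\<in>E. card e = 2"
  shows "csf V E \<alpha> = (\<Sum>S\<in>Pow E. (-1)^card S * of_nat (mcount V S \<alpha>))"
proof -
  let ?C = "colourings V \<alpha>"
  define M where "M \<kappa> = {e\<in>E. \<forall>a\<in>e. \<forall>b\<in>e. \<kappa> a = \<kappa> b}" for \<kappa> :: "'a \<Rightarrow> nat"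
  have finC: "finite ?C" by (rule finite_colourings[OF fin])
  have set1: "{\<kappa> \<in> proper_colourings V E. \<forall>i. card {x\<in>V. \<kappa> x = i} = \<alpha> i} = {\<kappa>\<in>?C. M \<kappa> = {}}"
  proof -
    have pe: "(\<forall>x\<in>e. \<forall>y\<in>e. x \<noteq> y \<longrightarrow> \<kappa> x \<noteq> \<kappa> y) \<longleftrightarrow> \<not> (\<forall>a\<in>e. \<forall>b\<in>e. \<kappa> a = \<kappa> b)"
      if "e \<in> E" for e and \<kappa> :: "'a \<Rightarrow> nat"
    proof -
      have "card e = 2" using c2 that by blast
      then obtain p q where "e = {p, q}" "p \<noteq> q" unfolding card_2_iff by blast
      then show ?thesis by auto
    qed
    have Me: "(M \<kappa> = {}) = (\<forall>e\<in>E. \<forall>x\<in>e. \<forall>y\<in>e. x \<noteq> y \<longrightarrow> \<kappa> x \<noteq> \<kappa> y)" for \<kappa>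
    proof -
      have "(M \<kappa> = {}) = (\<forall>e\<in>E. \<not> (\<forall>a\<in>e. \<forall>b\<in>e. \<kappa> a = \<kappa> b))" unfolding M_def by blast
      also have "\<dots> = (\<forall>e\<in>E. \<forall>x\<in>e. \<forall>y\<in>e. x \<noteq> y \<longrightarrow> \<kappa> x \<noteq> \<kappa> y)"
        by (intro ball_cong refl) (simp only: pe)
      finally show ?thesis .
    qed
    show ?thesis
    proof (rule set_eqI)
      fix \<kappa>
      show "\<kappa> \<in> {\<kappa> \<in> proper_colourings V E. \<forall>i. card {x\<in>V. \<kappa> x = i} = \<alpha> i} \<longleftrightarrow> \<kappa> \<in> {\<kappa>\<in>?C. M \<kappa> = {}}"
        unfolding proper_colourings_def colourings_def Me mem_Collect_eq by (rule iffI; elim conjE; intro conjI; assumption)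
    qed
  qed
  have monoeq: "mcount V S \<alpha> = card {\<kappa>\<in>?C. S \<subseteq> M \<kappa>}" if "S \<subseteq> E" for S
  proof -
    have "{\<kappa>\<in>?C. \<forall>e\<in>S. \<forall>a\<in>e. \<forall>b\<in>e. \<kappa> a = \<kappa> b} = {\<kappa>\<in>?C. S \<subseteq> M \<kappa>}"
      using that unfolding M_def by auto
    then show ?thesis by (simp add: mcount_def)
  qed
  have cardsum: "of_nat (card {\<kappa>\<in>?C. P \<kappa>}) = (\<Sum>\<kappa>\<in>?C. if P \<kappa> then 1 else (0::rat))" for P
    using finC by (simp add: sum.If_cases Int_def)
  have "(\<Sum>S\<in>Pow E. (-1)^card S * of_nat (mcount V S \<alpha>))
      = (\<Sum>S\<in>Pow E. \<Sum>\<kappa>\<in>?C. (-1)^card S * (if S \<subseteq> M \<kappa> then 1 else (0::rat)))"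
    by (rule sum.cong[OF refl]) (simp add: monoeq cardsum sum_distrib_left)
  also have "\<dots> = (\<Sum>\<kappa>\<in>?C. \<Sum>S\<in>Pow E. (-1)^card S * (if S \<subseteq> M \<kappa> then 1 else (0::rat)))"
    by (rule sum.swap)
  also have "\<dots> = (\<Sum>\<kappa>\<in>?C. if M \<kappa> = {} then 1 else 0)"
  proof (rule sum.cong[OF refl])
    fix \<kappa> assume "\<kappa> \<in> ?C"
    have ME: "M \<kappa> \<subseteq> E" by (auto simp: M_def)
    have "(\<Sum>S\<in>Pow E. (-1)^card S * (if S \<subseteq> M \<kappa> then 1 else (0::rat)))
        = (\<Sum>S\<in>Pow E. if S \<in> Pow (M \<kappa>) then (-1)^card S else 0)"
      by (rule sum.cong) auto
    also have "\<dots> = (\<Sum>S\<in>Pow E \<inter> Pow (M \<kappa>). (-1)^card S)"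
      by (rule sum.inter_restrict[symmetric]) (use finE in simp)
    also have "Pow E \<inter> Pow (M \<kappa>) = Pow (M \<kappa>)" using ME by auto
    also have "(\<Sum>S\<in>Pow (M \<kappa>). (-1::rat)^card S) = (if M \<kappa> = {} then 1 else 0)"
      by (rule sum_pow_sign) (use ME finE in \<open>auto intro: finite_subset\<close>)
    finally show "(\<Sum>S\<in>Pow E. (-1)^card S * (if S \<subseteq> M \<kappa> then 1 else (0::rat))) = (if M \<kappa> = {} then 1 else 0)" .
  qed
  also have "\<dots> = of_nat (card {\<kappa>\<in>?C. M \<kappa> = {}})" by (simp add: cardsum)
  also have "\<dots> = csf V E \<alpha>" by (simp add: csf_def set1)
  finally show ?thesis by simp
qed



lemma mcount_path:
  assumes S: "S \<subseteq> PE n"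
  shows "mcount {0..<n} S \<alpha> = pp (bl n S) \<alpha>"
proof -
  have "{\<kappa>\<in>colourings {0..<n} \<alpha>. \<forall>e\<in>S. \<forall>a\<in>e. \<forall>b\<in>e. \<kappa> a = \<kappa> b}
      = {\<kappa>\<in>colourings {0..<n} \<alpha>. \<forall>x\<in>{0..<n}. \<forall>y\<in>{0..<n}. bk n S x = bk n S y \<longrightarrow> \<kappa> x = \<kappa> y}"
    using bk_const_iff[OF S] by blast
  then show ?thesis unfolding mcount_def bl_def using block_count[OF _ bk_image[OF S]] by simp
qed

lemma blocks_props:
  assumes fin: "finite V" and bV: "b ` V = {0..<r}"
  shows "0 \<notin> set (map (\<lambda>j. card {x\<in>V. b x = j}) [0..<r])"
    "sum_list (map (\<lambda>j. card {x\<in>V. b x = j}) [0..<r]) = card V"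
proof -
  show "0 \<notin> set (map (\<lambda>j. card {x\<in>V. b x = j}) [0..<r])"
  proof
    assume "0 \<in> set (map (\<lambda>j. card {x\<in>V. b x = j}) [0..<r])"
    then obtain j where j0: "j \<in> set [0..<r]" "0 = card {x\<in>V. b x = j}"
      unfolding set_map by blast
    then have "j \<in> b ` V" using bV by simp
    then obtain x where "x \<in> V" "b x = j" by blast
    then have "{x\<in>V. b x = j} \<noteq> {}" by auto
    moreover have "finite {x\<in>V. b x = j}" using fin by simp
    ultimately show False using j0(2) card_0_eq by metis
  qed
  have "sum_list (map (\<lambda>j. card {x\<in>V. b x = j}) [0..<r]) = (\<Sum>j\<in>{0..<r}. card {x\<in>V. b x = j})"
    by (simp add: sum_set_upt_conv_sum_list_nat[symmetric])
  also have "\<dots> = (\<Sum>j\<in>{0..<r}. sum (\<lambda>_. 1::nat) {x\<in>V. b x = j})" by simp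
  also have "\<dots> = sum (\<lambda>_. 1) V"
    by (rule sum.group) (use bV fin in auto)
  finally show "sum_list (map (\<lambda>j. card {x\<in>V. b x = j}) [0..<r]) = card V" by simp
qed

definition eqv :: "'a set set \<Rightarrow> 'a \<Rightarrow> 'a \<Rightarrow> bool" where
  "eqv S x y \<longleftrightarrow> (\<forall>\<kappa>::'a\<Rightarrow>nat. (\<forall>e\<in>S. \<forall>a\<in>e. \<forall>b\<in>e. \<kappa> a = \<kappa> b) \<longrightarrow> \<kappa> x = \<kappa> y)"

lemma mcount_general:
  assumes fin: "finite V" and SV: "\<forall>e\<in>S. e \<subseteq> V"
  shows "\<exists>c. 0 \<notin> set c \<and> sum_list c = card V \<and> (\<forall>\<alpha>. mcount V S \<alpha> = pp c \<alpha>)"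
proof -
  define cls where "cls x = {y\<in>V. eqv S x y}" for x
  let ?Q = "cls ` V"
  have finQ: "finite ?Q" using fin by simp
  obtain g where g: "bij_betw g {0..<card ?Q} ?Q" using ex_bij_betw_nat_finite[OF finQ] by blast
  define b where "b x = inv_into {0..<card ?Q} g (cls x)" for x
  have bV: "b ` V = {0..<card ?Q}"
  proof -
    have "b ` V = inv_into {0..<card ?Q} g ` ?Q" by (auto simp: b_def)
    also have "\<dots> = {0..<card ?Q}" using bij_betw_inv_into[OF g] by (simp add: bij_betw_def)
    finally show ?thesis .
  qed
  have eqv_sym: "eqv S x y \<Longrightarrow> eqv S y x" for x y unfolding eqv_def by metis
  have eqv_trans: "eqv S x y \<Longrightarrow> eqv S y z \<Longrightarrow> eqv S x z" for x y z unfolding eqv_def by metis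
  have bb: "b x = b y \<longleftrightarrow> eqv S x y" if xy: "x \<in> V" "y \<in> V" for x y
  proof
    assume "b x = b y"
    then have "g (b x) = g (b y)" by simp
    moreover have "g (b x) = cls x" "g (b y) = cls y"
      unfolding b_def using xy by (auto intro!: f_inv_into_f[of _ g] simp: bij_betw_def[of g] g[unfolded bij_betw_def])
    ultimately have "cls x = cls y" by simp
    moreover have "y \<in> cls y" using xy by (simp add: cls_def eqv_def)
    ultimately have "y \<in> cls x" by simp
    then show "eqv S x y" by (simp add: cls_def)
  next
    assume e: "eqv S x y"
    have "cls x = cls y"
      unfolding cls_def using e eqv_sym eqv_trans by blast
    then show "b x = b y" by (simp add: b_def)
  qed
  have pred: "(\<forall>e\<in>S. \<forall>a\<in>e. \<forall>b\<in>e. \<kappa> a = \<kappa> b) \<longleftrightarrow> (\<forall>x\<in>V. \<forall>y\<in>V. b x = b y \<longrightarrow> \<kappa> x = \<kappa> y)"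
    for \<kappa> :: "'a \<Rightarrow> nat"
  proof
    assume H: "\<forall>e\<in>S. \<forall>a\<in>e. \<forall>b\<in>e. \<kappa> a = \<kappa> b"
    show "\<forall>x\<in>V. \<forall>y\<in>V. b x = b y \<longrightarrow> \<kappa> x = \<kappa> y"
    proof (intro ballI impI)
      fix x y assume "x \<in> V" "y \<in> V" "b x = b y"
      then have "eqv S x y" using bb by blast
      then show "\<kappa> x = \<kappa> y" using H unfolding eqv_def by blast
    qed
  next
    assume H: "\<forall>x\<in>V. \<forall>y\<in>V. b x = b y \<longrightarrow> \<kappa> x = \<kappa> y"
    show "\<forall>e\<in>S. \<forall>a\<in>e. \<forall>b\<in>e. \<kappa> a = \<kappa> b"
    proof (intro ballI)
      fix e p q assume e: "e \<in> S" and pq: "p \<in> e" "q \<in> e"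
      then have V: "p \<in> V" "q \<in> V" using SV by auto
      have "eqv S p q" unfolding eqv_def using e pq by blast
      then have "b p = b q" using bb V by blast
      then show "\<kappa> p = \<kappa> q" using H V by blast
    qed
  qed
  define c where "c = map (\<lambda>j. card {x\<in>V. b x = j}) [0..<card ?Q]"
  have "mcount V S \<alpha> = pp c \<alpha>" for \<alpha>
  proof -
    have "{\<kappa>\<in>colourings V \<alpha>. \<forall>e\<in>S. \<forall>a\<in>e. \<forall>b\<in>e. \<kappa> a = \<kappa> b}
       = {\<kappa>\<in>colourings V \<alpha>. \<forall>x\<in>V. \<forall>y\<in>V. b x = b y \<longrightarrow> \<kappa> x = \<kappa> y}"
      using pred by blast
    then show ?thesis unfolding mcount_def c_def using block_count[OF fin bV] by simp
  qed
  then show ?thesis using blocks_props[OF fin bV] unfolding c_def[symmetric] by blast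
qed



abbreviation XP :: "nat list \<Rightarrow> (nat \<Rightarrow> nat) \<Rightarrow> rat" where
  "XP l \<equiv> csf (path_V l) (path_E l)"

lemma partitionsD:
  assumes "l \<in> partitions n"
  shows "0 \<notin> set l" "sum_list l = n" "sorted_wrt (\<ge>) l"
  using assms by (auto simp: partitions_def)

lemma partitions_len: "l \<in> partitions n \<Longrightarrow> length l \<le> n"
  using ps_ge[of l "length l"] ps_len[of l] partitionsD[of l n] by auto

lemma finite_partitions: "finite (partitions n)"
proof (rule finite_subset)
  show "partitions n \<subseteq> {xs. set xs \<subseteq> {0..n} \<and> length xs \<le> n}"
  proof
    fix l assume l: "l \<in> partitions n"
    have "set l \<subseteq> {0..n}" using member_le_sum_list[of _ l] partitionsD(2)[OF l] by auto
    then show "l \<in> {xs. set xs \<subseteq> {0..n} \<and> length xs \<le> n}" using partitions_len[OF l] by simp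
  qed
  show "finite {xs. set xs \<subseteq> {0..n} \<and> length xs \<le> n}" by (rule finite_lists_length_le) simp
qed

definition srt :: "nat list \<Rightarrow> nat list" where "srt c = rev (sort c)"

lemma srt_props: "mset (srt c) = mset c" "length (srt c) = length c"
  by (simp_all add: srt_def)

lemma srt_part:
  assumes "0 \<notin> set c" "sum_list c = n"
  shows "srt c \<in> partitions n"
proof -
  have "sorted_wrt (\<ge>) (srt c)" by (simp add: srt_def sorted_wrt_rev)
  moreover have "set (srt c) = set c" by (simp add: srt_def)
  moreover have "sum_list (srt c) = sum_list c" by (metis mset_rev mset_sort srt_def sum_mset_sum_list)
  ultimately show ?thesis using assms by (simp add: partitions_def)
qed

lemma srt_id: "l \<in> partitions n \<Longrightarrow> srt l = l"
proof -
  assume l: "l \<in> partitions n"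
  have "sorted_wrt (\<ge>) (srt l)" by (simp add: srt_def sorted_wrt_rev)
  then show "srt l = l" using sorted_desc_eq partitionsD(3)[OF l] srt_props(1) by blast
qed

lemma pp_srt: "pp (srt c) \<alpha> = pp c \<alpha>"
  by (rule pp_perm) (simp add: srt_props)

lemma path_V_eq: "l \<in> partitions n \<Longrightarrow> path_V l = {0..<n}"
  using partitionsD(2) by (simp add: path_V_def)

lemma path_E_card2: "\<forall>e\<in>path_E l. card e = 2"
  by (auto simp: path_E_def)

lemma finite_path_E: "finite (path_E l)"
  using finite_subset[OF path_E_sub finite_PE] .

lemma XP_expand:
  assumes l: "l \<in> partitions n"
  shows "XP l \<alpha> = (\<Sum>S\<in>Pow (path_E l). (-1)^card S * of_nat (pp (srt (bl n S)) \<alpha>))"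
proof -
  have "XP l \<alpha> = (\<Sum>S\<in>Pow (path_E l). (-1)^card S * of_nat (mcount {0..<n} S \<alpha>))"
    using inclusion_exclusion_csf[OF _ finite_path_E path_E_card2] path_V_eq[OF l] by simp
  also have "\<dots> = (\<Sum>S\<in>Pow (path_E l). (-1)^card S * of_nat (pp (srt (bl n S)) \<alpha>))"
  proof (rule sum.cong[OF refl])
    fix S assume "S \<in> Pow (path_E l)"
    then have "S \<subseteq> PE n" using path_E_sub[of l] partitionsD(2)[OF l] by auto
    then show "(-1)^card S * of_nat (mcount {0..<n} S \<alpha>) = (-1)^card S * of_nat (pp (srt (bl n S)) \<alpha>)"
      by (simp add: mcount_path pp_srt)
  qed
  finally show ?thesis .
qed

lemma ty_part:
  assumes l: "l \<in> partitions n" and S: "S \<subseteq> path_E l"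
  shows "srt (bl n S) \<in> partitions n" "length (srt (bl n S)) = n - card S"
proof -
  have "S \<subseteq> PE n" using S path_E_sub[of l] partitionsD(2)[OF l] by auto
  then show "srt (bl n S) \<in> partitions n" "length (srt (bl n S)) = n - card S"
    using bl_props[of S n] srt_part srt_props by auto
qed

lemma bl_full:
  assumes l: "l \<in> partitions n"
  shows "srt (bl n (path_E l)) = l" "card (path_E l) = n - length l"
  using bl_path[OF partitionsD(1)[OF l]] card_path_E[OF partitionsD(1)[OF l]]
    partitionsD(2)[OF l] srt_id[OF l] by auto

definition inspan :: "nat \<Rightarrow> ((nat \<Rightarrow> nat) \<Rightarrow> rat) \<Rightarrow> bool" where
  "inspan n F \<longleftrightarrow> (\<exists>a. \<forall>\<alpha>. F \<alpha> = (\<Sum>l\<in>partitions n. a l * XP l \<alpha>))"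

lemma inspan_XP: "l \<in> partitions n \<Longrightarrow> inspan n (XP l)"
  unfolding inspan_def
  by (rule exI[of _ "\<lambda>l'. if l' = l then 1 else 0"])
     (simp add: if_distrib[of "\<lambda>x. x * _"] sum.delta[OF finite_partitions] cong: if_cong)

lemma inspan_zero: "inspan n (\<lambda>_. 0)"
  unfolding inspan_def by (rule exI[of _ "\<lambda>_. 0"]) simp

lemma inspan_add: "inspan n F \<Longrightarrow> inspan n G \<Longrightarrow> inspan n (\<lambda>\<alpha>. F \<alpha> + G \<alpha>)"
proof -
  assume "inspan n F" "inspan n G"
  then obtain a b where a: "\<And>\<alpha>. F \<alpha> = (\<Sum>l\<in>partitions n. a l * XP l \<alpha>)"
    and b: "\<And>\<alpha>. G \<alpha> = (\<Sum>l\<in>partitions n. b l * XP l \<alpha>)" unfolding inspan_def by blast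
  show ?thesis unfolding inspan_def
    by (rule exI[of _ "\<lambda>l. a l + b l"]) (simp add: a b sum.distrib distrib_right)
qed

lemma inspan_scale: "inspan n F \<Longrightarrow> inspan n (\<lambda>\<alpha>. c * F \<alpha>)"
proof -
  assume "inspan n F"
  then obtain a where a: "\<And>\<alpha>. F \<alpha> = (\<Sum>l\<in>partitions n. a l * XP l \<alpha>)" unfolding inspan_def by blast
  show ?thesis unfolding inspan_def
    by (rule exI[of _ "\<lambda>l. c * a l"]) (simp add: a sum_distrib_left mult.assoc)
qed

lemma inspan_sum: "finite I \<Longrightarrow> (\<And>i. i \<in> I \<Longrightarrow> inspan n (F i)) \<Longrightarrow> inspan n (\<lambda>\<alpha>. \<Sum>i\<in>I. F i \<alpha>)"
proof (induction I rule: finite_induct)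
  case empty then show ?case by (simp add: inspan_zero)
next
  case (insert x I)
  then have "inspan n (\<lambda>\<alpha>. F x \<alpha> + (\<Sum>i\<in>I. F i \<alpha>))" by (intro inspan_add) auto
  then show ?case using insert.hyps by simp
qed

lemma pp_span_aux:
  "\<forall>\<nu>. \<nu> \<in> partitions n \<longrightarrow> n - length \<nu> = k \<longrightarrow> inspan n (\<lambda>\<alpha>. of_nat (pp \<nu> \<alpha>))"
proof (induction k rule: less_induct)
  case (less k)
  show ?case
  proof (intro allI impI)
    fix \<nu> assume \<nu>: "\<nu> \<in> partitions n" and k: "n - length \<nu> = k"
    let ?E = "path_E \<nu>"
    have finE: "finite ?E" by (rule finite_path_E)
    have cE: "card ?E = n - length \<nu>" using bl_full[OF \<nu>] by simp
    have rest: "inspan n (\<lambda>\<alpha>. \<Sum>S\<in>Pow ?E - {?E}. (-1)^card S * of_nat (pp (srt (bl n S)) \<alpha>))"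
    proof (rule inspan_sum)
      show "finite (Pow ?E - {?E})" using finE by simp
    next
      fix S assume S: "S \<in> Pow ?E - {?E}"
      then have SE: "S \<subseteq> ?E" "S \<noteq> ?E" by auto
      have "card S < card ?E" using SE finE by (meson psubsetI psubset_card_mono)
      then have lt: "n - length (srt (bl n S)) < k"
        using ty_part(2)[OF \<nu> SE(1)] cE k partitions_len[OF \<nu>] by simp
      have "inspan n (\<lambda>\<alpha>. of_nat (pp (srt (bl n S)) \<alpha>))"
        using less.IH[OF lt] ty_part(1)[OF \<nu> SE(1)] by blast
      then show "inspan n (\<lambda>\<alpha>. (-1)^card S * of_nat (pp (srt (bl n S)) \<alpha>))"
        by (rule inspan_scale)
    qed
    have eq: "of_nat (pp \<nu> \<alpha>) = (-1)^card ?E * (XP \<nu> \<alpha> + (-1) * (\<Sum>S\<in>Pow ?E - {?E}. (-1)^card S * of_nat (pp (srt (bl n S)) \<alpha>)))"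
      for \<alpha>
    proof -
      have "XP \<nu> \<alpha> = (-1)^card ?E * of_nat (pp (srt (bl n ?E)) \<alpha>)
          + (\<Sum>S\<in>Pow ?E - {?E}. (-1)^card S * of_nat (pp (srt (bl n S)) \<alpha>))"
        unfolding XP_expand[OF \<nu>] by (rule sum.remove) (use finE in auto)
      then have "XP \<nu> \<alpha> = (-1)^card ?E * of_nat (pp \<nu> \<alpha>)
          + (\<Sum>S\<in>Pow ?E - {?E}. (-1)^card S * of_nat (pp (srt (bl n S)) \<alpha>))"
        using bl_full(1)[OF \<nu>] by simp
      moreover have "(-1::rat)^card ?E * (-1)^card ?E = 1" by (simp add: power_mult_distrib[symmetric])
      ultimately show ?thesis by (simp add: algebra_simps)
    qed
    have "inspan n (\<lambda>\<alpha>. (-1)^card ?E * (XP \<nu> \<alpha> + (-1) * (\<Sum>S\<in>Pow ?E - {?E}. (-1)^card S * of_nat (pp (srt (bl n S)) \<alpha>))))"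
      by (intro inspan_scale inspan_add inspan_XP[OF \<nu>] rest)
    then show "inspan n (\<lambda>\<alpha>. of_nat (pp \<nu> \<alpha>))" by (simp only: eq[symmetric])
  qed
qed

lemma pp_span: "\<nu> \<in> partitions n \<Longrightarrow> inspan n (\<lambda>\<alpha>. of_nat (pp \<nu> \<alpha>))"
  using pp_span_aux by blast

lemma csf_span:
  assumes G: "simple_graph V E"
  shows "inspan (card V) (csf V E)"
proof -
  have fin: "finite V" and Ee: "\<forall>e\<in>E. e \<subseteq> V \<and> card e = 2" using G by (auto simp: simple_graph_def)
  have finE: "finite E" using fin Ee by (meson Pow_iff finite_Pow_iff finite_subset subsetI)
  have "inspan (card V) (\<lambda>\<alpha>. \<Sum>S\<in>Pow E. (-1)^card S * of_nat (mcount V S \<alpha>))"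
  proof (rule inspan_sum)
    show "finite (Pow E)" using finE by simp
  next
    fix S assume "S \<in> Pow E"
    then have "\<forall>e\<in>S. e \<subseteq> V" using Ee by auto
    then obtain c where c: "0 \<notin> set c" "sum_list c = card V" "\<And>\<alpha>. mcount V S \<alpha> = pp c \<alpha>"
      using mcount_general[OF fin] by blast
    have "inspan (card V) (\<lambda>\<alpha>. of_nat (pp (srt c) \<alpha>))" by (rule pp_span[OF srt_part[OF c(1,2)]])
    then have "inspan (card V) (\<lambda>\<alpha>. of_nat (mcount V S \<alpha>))" by (simp add: c(3) pp_srt)
    then show "inspan (card V) (\<lambda>\<alpha>. (-1)^card S * of_nat (mcount V S \<alpha>))" by (rule inspan_scale)
  qed
  moreover have "csf V E = (\<lambda>\<alpha>. \<Sum>S\<in>Pow E. (-1)^card S * of_nat (mcount V S \<alpha>))"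
    using inclusion_exclusion_csf[OF fin finE] Ee by (simp add: fun_eq_iff)
  ultimately show ?thesis by simp
qed



lemma XP_regroup:
  assumes l: "l \<in> partitions n"
  shows "XP l \<alpha> = (\<Sum>\<nu>\<in>partitions n. (\<Sum>S\<in>{S\<in>Pow (path_E l). srt (bl n S) = \<nu>}. (-1)^card S) * of_nat (pp \<nu> \<alpha>))"
proof -
  let ?A = "Pow (path_E l)" and ?ty = "\<lambda>S. srt (bl n S)"
  have finA: "finite ?A" using finite_path_E by simp
  have "XP l \<alpha> = (\<Sum>S\<in>?A. (-1)^card S * of_nat (pp (?ty S) \<alpha>))" by (rule XP_expand[OF l])
  also have "\<dots> = (\<Sum>\<nu>\<in>partitions n. \<Sum>S\<in>{S\<in>?A. ?ty S = \<nu>}. (-1)^card S * of_nat (pp (?ty S) \<alpha>))"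
    by (rule sum.group[symmetric]) (use finA finite_partitions ty_part(1)[OF l] in auto)
  also have "\<dots> = (\<Sum>\<nu>\<in>partitions n. (\<Sum>S\<in>{S\<in>?A. ?ty S = \<nu>}. (-1)^card S) * of_nat (pp \<nu> \<alpha>))"
    by (rule sum.cong[OF refl]) (simp add: sum_distrib_right)
  finally show ?thesis .
qed

lemma XP_indep:
  assumes z: "\<And>\<alpha>. (\<Sum>l\<in>partitions n. d l * XP l \<alpha>) = 0"
  shows "\<forall>l\<in>partitions n. d l = 0"
proof (rule ccontr)
  let ?P = "partitions n"
  let ?c = "\<lambda>l \<nu>. (\<Sum>S\<in>{S\<in>Pow (path_E l). srt (bl n S) = \<nu>}. (-1::rat)^card S)"
  define B where "B \<nu> = (\<Sum>l\<in>?P. d l * ?c l \<nu>)" for \<nu>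
  have "(\<Sum>\<nu>\<in>?P. B \<nu> * of_nat (pp \<nu> \<alpha>)) = 0" for \<alpha>
  proof -
    have "(\<Sum>l\<in>?P. d l * XP l \<alpha>) = (\<Sum>l\<in>?P. \<Sum>\<nu>\<in>?P. d l * ?c l \<nu> * of_nat (pp \<nu> \<alpha>))"
    proof (rule sum.cong[OF refl])
      fix l assume l: "l \<in> ?P"
      show "d l * XP l \<alpha> = (\<Sum>\<nu>\<in>?P. d l * ?c l \<nu> * of_nat (pp \<nu> \<alpha>))"
        unfolding XP_regroup[OF l] by (subst sum_distrib_left) (rule sum.cong[OF refl], simp only: mult.assoc)
    qed
    also have "\<dots> = (\<Sum>\<nu>\<in>?P. \<Sum>l\<in>?P. d l * ?c l \<nu> * of_nat (pp \<nu> \<alpha>))" by (rule sum.swap)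
    also have "\<dots> = (\<Sum>\<nu>\<in>?P. B \<nu> * of_nat (pp \<nu> \<alpha>))" by (simp add: B_def sum_distrib_right)
    finally show ?thesis using z by simp
  qed
  then have B0: "\<forall>\<nu>\<in>?P. B \<nu> = 0"
    by (intro pp_indep[OF finite_partitions]) (auto dest: partitionsD)
  assume "\<not> (\<forall>l\<in>?P. d l = 0)"
  then have Zne: "{l\<in>?P. d l \<noteq> 0} \<noteq> {}" by auto
  let ?Z = "{l\<in>?P. d l \<noteq> 0}"
  have Zfin: "finite ?Z" using finite_partitions by simp
  define L where "L = Min (length ` ?Z)"
  have "L \<in> length ` ?Z" unfolding L_def using Zfin Zne by (intro Min_in) auto
  then obtain l0 where l0: "l0 \<in> ?P" "d l0 \<noteq> 0" "length l0 = L" by auto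
  have Lmin: "\<And>l. l \<in> ?P \<Longrightarrow> d l \<noteq> 0 \<Longrightarrow> L \<le> length l"
    unfolding L_def using Zfin by (intro Min_le) auto
  have key: "S = path_E l \<and> l = l0"
    if l: "l \<in> ?P" "d l \<noteq> 0" and S: "S \<in> Pow (path_E l)" "srt (bl n S) = l0" for l S
  proof -
    have SE: "S \<subseteq> path_E l" using S by simp
    have "length l0 = n - card S" using ty_part(2)[OF l(1) SE] S(2) by simp
    moreover have "card S \<le> card (path_E l)" using SE finite_path_E by (rule card_mono[rotated])
    moreover have "card (path_E l) = n - length l" using bl_full(2)[OF l(1)] .
    moreover have "length l0 \<le> length l" using Lmin[OF l] l0 by simp
    moreover have "length l \<le> n" using partitions_len[OF l(1)] .
    ultimately have "card S = card (path_E l)" by linarith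
    then have Seq: "S = path_E l" using card_subset_eq[OF finite_path_E SE] by simp
    then have "l = l0" using S(2) bl_full(1)[OF l(1)] by simp
    then show ?thesis using Seq by simp
  qed
  have others: "d l * ?c l l0 = 0" if l: "l \<in> ?P - {l0}" for l
  proof (cases "d l = 0")
    case True then show ?thesis by simp
  next
    case False
    have e: "{S\<in>Pow (path_E l). srt (bl n S) = l0} = {}"
      using key[of l] l False by auto
    show ?thesis unfolding e by simp
  qed
  have e0: "{S\<in>Pow (path_E l0). srt (bl n S) = l0} = {path_E l0}"
    using key[OF l0(1,2)] bl_full(1)[OF l0(1)] by auto
  have c0: "?c l0 l0 = (-1)^card (path_E l0)" unfolding e0 by simp
  have z0: "(\<Sum>l\<in>?P - {l0}. d l * ?c l l0) = 0" by (rule sum.neutral) (use others in blast)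
  have "B l0 = d l0 * ?c l0 l0 + (\<Sum>l\<in>?P - {l0}. d l * ?c l l0)"
    unfolding B_def by (rule sum.remove[OF finite_partitions l0(1)])
  then have "B l0 = d l0 * ?c l0 l0" using z0 by simp
  also have "\<dots> \<noteq> 0" using c0 l0(2) by simp
  finally show False using B0 l0(1) by blast
qed

lemma path_coeffs_char:
  assumes G: "simple_graph V E"
  shows "(\<forall>\<mu>. \<mu> \<notin> partitions (card V) \<longrightarrow> path_coeffs V E \<mu> = 0) \<and>
      (\<forall>\<alpha>. csf V E \<alpha> = (\<Sum>p\<in>partitions (card V). path_coeffs V E p * XP p \<alpha>))"
proof -
  let ?P = "partitions (card V)"
  let ?Q = "\<lambda>a. (\<forall>\<mu>. \<mu> \<notin> ?P \<longrightarrow> a \<mu> = 0) \<and> (\<forall>\<alpha>. csf V E \<alpha> = (\<Sum>p\<in>?P. a p * XP p \<alpha>))"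
  obtain a where a: "\<And>\<alpha>. csf V E \<alpha> = (\<Sum>p\<in>?P. a p * XP p \<alpha>)"
    using csf_span[OF G] unfolding inspan_def by blast
  define a' where "a' \<mu> = (if \<mu> \<in> ?P then a \<mu> else 0)" for \<mu>
  have "?Q a'"
  proof
    show "\<forall>\<mu>. \<mu> \<notin> ?P \<longrightarrow> a' \<mu> = 0" by (simp add: a'_def)
    show "\<forall>\<alpha>. csf V E \<alpha> = (\<Sum>p\<in>?P. a' p * XP p \<alpha>)" by (simp add: a a'_def)
  qed
  moreover have "b = a'" if b: "?Q b" for b
  proof
    fix \<mu>
    show "b \<mu> = a' \<mu>"
    proof (cases "\<mu> \<in> ?P")
      case False then show ?thesis using b by (simp add: a'_def)
    next
      case True
      have "(\<Sum>p\<in>?P. (b p - a' p) * XP p \<alpha>) = 0" for \<alpha>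
      proof -
        have "(\<Sum>p\<in>?P. (b p - a' p) * XP p \<alpha>) = (\<Sum>p\<in>?P. b p * XP p \<alpha>) - (\<Sum>p\<in>?P. a' p * XP p \<alpha>)"
          by (simp add: left_diff_distrib sum_subtractf)
        also have "\<dots> = 0" using b \<open>?Q a'\<close> by simp
        finally show ?thesis .
      qed
      then have "\<forall>p\<in>?P. b p - a' p = 0" by (rule XP_indep)
      then show ?thesis using True by simp
    qed
  qed
  ultimately have "\<exists>!a. ?Q a" by blast
  then have "?Q (THE a. ?Q a)" by (rule theI')
  then show ?thesis unfolding path_coeffs_def .
qed



definition Aset :: "nat \<Rightarrow> nat \<Rightarrow> (nat \<Rightarrow> nat) set" where
  "Aset N m = {\<alpha>. \<forall>i. (i \<in> {..m} \<longrightarrow> \<alpha> i \<in> {..N}) \<and> (i \<notin> {..m} \<longrightarrow> \<alpha> i = 0)}"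

lemma finite_Aset: "finite (Aset N m)"
  unfolding Aset_def by (rule finite_set_of_finite_funs) auto

definition chi :: "'a set \<Rightarrow> 'a set set \<Rightarrow> nat \<Rightarrow> nat" where
  "chi V E m = card {\<kappa>\<in>proper_colourings V E. \<forall>x. \<kappa> x \<le> m}"

lemma chi_sum:
  assumes fin: "finite V"
  shows "of_nat (chi V E m) = (\<Sum>\<alpha>\<in>Aset (card V) m. csf V E \<alpha>)"
proof -
  let ?T = "{\<kappa>\<in>proper_colourings V E. \<forall>x. \<kappa> x \<le> m}"
  define sz where "sz \<kappa> = (\<lambda>i. card {x\<in>V. \<kappa> x = i})" for \<kappa> :: "'a \<Rightarrow> nat"
  have finT: "finite ?T"
  proof (rule finite_subset)
    show "?T \<subseteq> {f. \<forall>x. (x \<in> V \<longrightarrow> f x \<in> {..m}) \<and> (x \<notin> V \<longrightarrow> f x = 0)}"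
      by (auto simp: proper_colourings_def)
    show "finite {f. \<forall>x. (x \<in> V \<longrightarrow> f x \<in> {..m}) \<and> (x \<notin> V \<longrightarrow> f x = 0)}"
      by (rule finite_set_of_finite_funs) (use fin in auto)
  qed
  have szA: "sz ` ?T \<subseteq> Aset (card V) m"
  proof
    fix \<beta> assume "\<beta> \<in> sz ` ?T"
    then obtain \<kappa> where k: "\<kappa> \<in> ?T" "\<beta> = sz \<kappa>" by blast
    have "\<beta> i \<in> {..card V}" for i unfolding k sz_def using fin by (auto intro: card_mono)
    moreover have "\<beta> i = 0" if "i \<notin> {..m}" for i
    proof -
      have e: "{x\<in>V. \<kappa> x = i} = {}" using k(1) that by force
      show ?thesis unfolding k sz_def e by simp
    qed
    ultimately show "\<beta> \<in> Aset (card V) m" by (simp add: Aset_def)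
  qed
  have fib: "{\<kappa>\<in>?T. sz \<kappa> = \<alpha>} = {\<kappa> \<in> proper_colourings V E. \<forall>i. card {x\<in>V. \<kappa> x = i} = \<alpha> i}"
    if a: "\<alpha> \<in> Aset (card V) m" for \<alpha>
  proof (rule set_eqI, rule iffI)
    fix \<kappa> assume "\<kappa> \<in> {\<kappa>\<in>?T. sz \<kappa> = \<alpha>}"
    then show "\<kappa> \<in> {\<kappa> \<in> proper_colourings V E. \<forall>i. card {x\<in>V. \<kappa> x = i} = \<alpha> i}"
      by (auto simp: sz_def)
  next
    fix \<kappa> assume k: "\<kappa> \<in> {\<kappa> \<in> proper_colourings V E. \<forall>i. card {x\<in>V. \<kappa> x = i} = \<alpha> i}"
    have "\<kappa> x \<le> m" for x
    proof (cases "x \<in> V")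
      case True
      have "card {y\<in>V. \<kappa> y = \<kappa> x} \<noteq> 0" using True fin by (auto simp: card_eq_0_iff)
      then have "\<alpha> (\<kappa> x) \<noteq> 0" using k by simp
      moreover have "\<kappa> x \<notin> {..m} \<longrightarrow> \<alpha> (\<kappa> x) = 0" using a by (simp add: Aset_def)
      ultimately show ?thesis by auto
    next
      case False then show ?thesis using k by (simp add: proper_colourings_def)
    qed
    then show "\<kappa> \<in> {\<kappa>\<in>?T. sz \<kappa> = \<alpha>}" using k by (auto simp: sz_def)
  qed
  have "card ?T = (\<Sum>\<alpha>\<in>Aset (card V) m. card {\<kappa>\<in>?T. sz \<kappa> = \<alpha>})"
  proof -
    have "(\<Sum>\<alpha>\<in>Aset (card V) m. sum (\<lambda>_. 1::nat) {\<kappa>\<in>?T. sz \<kappa> = \<alpha>}) = sum (\<lambda>_. 1) ?T"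
      by (rule sum.group[OF finT finite_Aset szA])
    then show ?thesis by simp
  qed
  also have "\<dots> = (\<Sum>\<alpha>\<in>Aset (card V) m. card {\<kappa> \<in> proper_colourings V E. \<forall>i. card {x\<in>V. \<kappa> x = i} = \<alpha> i})"
    by (rule sum.cong[OF refl], rule arg_cong[where f=card], erule fib)
  finally show ?thesis unfolding chi_def csf_def by simp
qed

lemma card_funs:
  "card {f::nat\<Rightarrow>nat. (\<forall>j<l. 1 \<le> f j \<and> f j \<le> m) \<and> (\<forall>j. l \<le> j \<longrightarrow> f j = 0)} = m ^ l"
proof -
  let ?F = "{f::nat\<Rightarrow>nat. (\<forall>j<l. 1 \<le> f j \<and> f j \<le> m) \<and> (\<forall>j. l \<le> j \<longrightarrow> f j = 0)}"
  have "bij_betw (\<lambda>f. restrict f {..<l}) ?F (PiE {..<l} (\<lambda>_. {1..m}))"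
  proof (rule bij_betw_byWitness[where f'="\<lambda>g j. if j < l then g j else 0"])
    show "\<forall>f\<in>?F. (\<lambda>j. if j < l then restrict f {..<l} j else 0) = f"
      by (auto simp: fun_eq_iff)
    show "\<forall>g\<in>PiE {..<l} (\<lambda>_. {1..m}). restrict (\<lambda>j. if j < l then g j else 0) {..<l} = g"
      by (auto simp: fun_eq_iff PiE_def extensional_def restrict_def)
    show "(\<lambda>f. restrict f {..<l}) ` ?F \<subseteq> PiE {..<l} (\<lambda>_. {1..m})"
    proof
      fix g assume "g \<in> (\<lambda>f. restrict f {..<l}) ` ?F"
      then obtain f where f: "f \<in> ?F" "g = restrict f {..<l}" by blast
      show "g \<in> PiE {..<l} (\<lambda>_. {1..m})" unfolding f(2) restrict_PiE_iff using f(1) by auto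
    qed
    show "(\<lambda>g j. if j < l then g j else 0) ` PiE {..<l} (\<lambda>_. {1..m}) \<subseteq> ?F"
      by (auto simp: PiE_def Pi_def)
  qed
  then have "card ?F = card (PiE {..<l} (\<lambda>_. {1..m}))" by (rule bij_betw_same_card)
  also have "\<dots> = m ^ l" by (simp add: card_PiE)
  finally show ?thesis .
qed

lemma pp_sum:
  assumes c0: "0 \<notin> set c" and cs: "sum_list c = N"
  shows "(\<Sum>\<alpha>\<in>Aset N m. pp c \<alpha>) = m ^ length c"
proof -
  let ?l = "length c"
  let ?F = "{f::nat\<Rightarrow>nat. (\<forall>j<?l. 1 \<le> f j \<and> f j \<le> m) \<and> (\<forall>j. ?l \<le> j \<longrightarrow> f j = 0)}"
  define sz where "sz f = (\<lambda>i. \<Sum>j\<in>{j. j<?l \<and> f j = i}. c!j)" for f :: "nat \<Rightarrow> nat"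
  have finF: "finite ?F"
  proof (rule finite_subset)
    show "?F \<subseteq> {f. \<forall>x. (x \<in> {..<?l} \<longrightarrow> f x \<in> {..m}) \<and> (x \<notin> {..<?l} \<longrightarrow> f x = 0)}" by auto
    show "finite {f. \<forall>x. (x \<in> {..<?l} \<longrightarrow> f x \<in> {..m}) \<and> (x \<notin> {..<?l} \<longrightarrow> f x = 0)}"
      by (rule finite_set_of_finite_funs) auto
  qed
  have tot: "(\<Sum>j\<in>{j. j<?l \<and> f j = i}. c!j) \<le> N" for f i
  proof -
    have "(\<Sum>j\<in>{j. j<?l \<and> f j = i}. c!j) \<le> (\<Sum>j\<in>{..<?l}. c!j)"
      by (rule sum_mono2) auto
    also have "\<dots> = N" using cs by (simp add: sum_list_sum_nth atLeast0LessThan)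
    finally show ?thesis .
  qed
  have szA: "sz ` ?F \<subseteq> Aset N m"
  proof
    fix \<beta> assume "\<beta> \<in> sz ` ?F"
    then obtain f where f: "f \<in> ?F" "\<beta> = sz f" by blast
    have "\<beta> i \<in> {..N}" for i unfolding f sz_def using tot by simp
    moreover have "\<beta> i = 0" if "i \<notin> {..m}" for i
    proof -
      have e: "{j. j<?l \<and> f j = i} = {}" using f(1) that by force
      show ?thesis unfolding f sz_def e by simp
    qed
    ultimately show "\<beta> \<in> Aset N m" by (simp add: Aset_def)
  qed
  have fib: "{f\<in>?F. sz f = \<alpha>} = ppset c \<alpha>" if a: "\<alpha> \<in> Aset N m" for \<alpha>
  proof (rule set_eqI, rule iffI)
    fix f assume "f \<in> {f\<in>?F. sz f = \<alpha>}"
    then show "f \<in> ppset c \<alpha>" by (auto simp: sz_def ppset_def)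
  next
    fix f assume f: "f \<in> ppset c \<alpha>"
    have "f j \<le> m" if j: "j < ?l" for j
    proof (rule ccontr)
      assume "\<not> f j \<le> m"
      moreover have "f j \<notin> {..m} \<longrightarrow> \<alpha> (f j) = 0" using a by (simp add: Aset_def)
      ultimately have "\<alpha> (f j) = 0" by auto
      then show False using ppset_pos_val[OF f j c0] by simp
    qed
    then have "f \<in> ?F" using ppset_memD(1,2)[OF f] by auto
    moreover have "sz f = \<alpha>" using ppset_memD(3)[OF f] by (simp add: sz_def fun_eq_iff)
    ultimately show "f \<in> {f\<in>?F. sz f = \<alpha>}" by simp
  qed
  have "card ?F = (\<Sum>\<alpha>\<in>Aset N m. card {f\<in>?F. sz f = \<alpha>})"
  proof -
    have "(\<Sum>\<alpha>\<in>Aset N m. sum (\<lambda>_. 1::nat) {f\<in>?F. sz f = \<alpha>}) = sum (\<lambda>_. 1) ?F"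
      by (rule sum.group[OF finF finite_Aset szA])
    then show ?thesis by simp
  qed
  also have "\<dots> = (\<Sum>\<alpha>\<in>Aset N m. pp c \<alpha>)"
    by (rule sum.cong[OF refl], unfold pp_def, rule arg_cong[where f=card], erule fib)
  finally show ?thesis using card_funs[of ?l m] by simp
qed

lemma chi_path:
  assumes l: "l \<in> partitions n"
  shows "(\<Sum>\<alpha>\<in>Aset n m. XP l \<alpha>) = of_nat m ^ length l * (of_nat m - 1) ^ (n - length l)"
proof -
  let ?E = "path_E l"
  have finE: "finite ?E" by (rule finite_path_E)
  have "(\<Sum>\<alpha>\<in>Aset n m. XP l \<alpha>) = (\<Sum>\<alpha>\<in>Aset n m. \<Sum>S\<in>Pow ?E. (-1)^card S * of_nat (pp (srt (bl n S)) \<alpha>))"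
    by (rule sum.cong[OF refl]) (rule XP_expand[OF l])
  also have "\<dots> = (\<Sum>S\<in>Pow ?E. \<Sum>\<alpha>\<in>Aset n m. (-1)^card S * of_nat (pp (srt (bl n S)) \<alpha>))"
    by (rule sum.swap)
  also have "\<dots> = (\<Sum>S\<in>Pow ?E. (-1)^card S * (of_nat m ^ length l) * of_nat m ^ (card ?E - card S))"
  proof (rule sum.cong[OF refl])
    fix S assume S: "S \<in> Pow ?E"
    then have SE: "S \<subseteq> ?E" by simp
    have SP: "S \<subseteq> PE n" using SE path_E_sub[of l] partitionsD(2)[OF l] by auto
    have c0: "0 \<notin> set (srt (bl n S))" using bl_props(2)[OF SP] by (simp add: srt_def)
    have cs: "sum_list (srt (bl n S)) = n"
      using bl_props(3)[OF SP] by (metis mset_rev mset_sort srt_def sum_mset_sum_list)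
    have "(\<Sum>\<alpha>\<in>Aset n m. pp (srt (bl n S)) \<alpha>) = m ^ (n - card S)"
      using pp_sum[OF c0 cs, of m] ty_part(2)[OF l SE] by simp
    moreover have "card S \<le> card ?E" using SE finE by (rule card_mono[rotated])
    moreover have "card ?E = n - length l" using bl_full(2)[OF l] .
    moreover have "length l \<le> n" using partitions_len[OF l] .
    ultimately have "n - card S = length l + (card ?E - card S)" by linarith
    then have eq: "(\<Sum>\<alpha>\<in>Aset n m. pp (srt (bl n S)) \<alpha>) = m ^ length l * m ^ (card ?E - card S)"
      using \<open>(\<Sum>\<alpha>\<in>Aset n m. pp (srt (bl n S)) \<alpha>) = m ^ (n - card S)\<close> by (simp add: power_add[symmetric])
    have "(\<Sum>\<alpha>\<in>Aset n m. (-1)^card S * of_nat (pp (srt (bl n S)) \<alpha>))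
        = (-1)^card S * (of_nat (\<Sum>\<alpha>\<in>Aset n m. pp (srt (bl n S)) \<alpha>) :: rat)"
      by (simp add: sum_distrib_left)
    also have "\<dots> = (-1)^card S * (of_nat m ^ length l) * of_nat m ^ (card ?E - card S)"
      unfolding eq by simp
    finally show "(\<Sum>\<alpha>\<in>Aset n m. (-1::rat)^card S * of_nat (pp (srt (bl n S)) \<alpha>))
        = (-1)^card S * (of_nat m ^ length l) * of_nat m ^ (card ?E - card S)" .
  qed
  also have "\<dots> = of_nat m ^ length l * (\<Sum>S\<in>Pow ?E. (-1)^card S * of_nat m ^ (card ?E - card S))"
    by (simp add: sum_distrib_left algebra_simps)
  also have "\<dots> = of_nat m ^ length l * (of_nat m - 1) ^ card ?E"
    by (simp add: subset_binom[OF finE])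
  also have "\<dots> = of_nat m ^ length l * (of_nat m - 1) ^ (n - length l)"
    using bl_full(2)[OF l] by simp
  finally show ?thesis .
qed



lemma simple_delete: "simple_graph V E \<Longrightarrow> simple_graph V (E - {e})"
  by (simp add: simple_graph_def)

lemma simple_contract:
  assumes G: "simple_graph V E" and e: "{u, v} \<in> E"
  shows "simple_graph (V - {v}) (contract_edges E u v)"
proof -
  have fin: "finite V" and Ee: "\<And>e'. e' \<in> E \<Longrightarrow> e' \<subseteq> V \<and> card e' = 2" using G by (auto simp: simple_graph_def)
  have uv: "u \<noteq> v" "u \<in> V" "v \<in> V" using Ee[OF e] by (auto simp: card_2_iff)
  let ?s = "\<lambda>x. if x = v then u else x"
  have "f \<subseteq> V - {v} \<and> card f = 2" if f: "f \<in> contract_edges E u v" for f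
  proof -
    obtain e' where e': "f = ?s ` e'" "e' \<in> E" "card (?s ` e') = 2"
      using f unfolding contract_edges_def by blast
    have "?s ` e' \<subseteq> V - {v}" using Ee[OF e'(2)] uv by auto
    then show ?thesis using e' by simp
  qed
  then show ?thesis using fin by (simp add: simple_graph_def)
qed

lemma dc_chi:
  assumes G: "simple_graph V E" and e: "{u, v} \<in> E"
  shows "chi V (E - {{u, v}}) m = chi V E m + chi (V - {v}) (contract_edges E u v) m"
proof -
  have fin: "finite V" and Ee: "\<And>e'. e' \<in> E \<Longrightarrow> e' \<subseteq> V \<and> card e' = 2" using G by (auto simp: simple_graph_def)
  have uv: "u \<noteq> v" "u \<in> V" "v \<in> V" using Ee[OF e] by (auto simp: card_2_iff)
  define s where "s x = (if x = v then u else x)" for x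
  let ?C = "contract_edges E u v"
  let ?T1 = "{\<kappa>\<in>proper_colourings V (E - {{u,v}}). \<forall>x. \<kappa> x \<le> m}"
  let ?T = "{\<kappa>\<in>proper_colourings V E. \<forall>x. \<kappa> x \<le> m}"
  let ?T3 = "{\<kappa>\<in>proper_colourings (V - {v}) ?C. \<forall>x. \<kappa> x \<le> m}"
  have finT1: "finite ?T1"
  proof (rule finite_subset)
    show "?T1 \<subseteq> {f. \<forall>x. (x \<in> V \<longrightarrow> f x \<in> {..m}) \<and> (x \<notin> V \<longrightarrow> f x = 0)}"
      by (auto simp: proper_colourings_def)
    show "finite {f. \<forall>x. (x \<in> V \<longrightarrow> f x \<in> {..m}) \<and> (x \<notin> V \<longrightarrow> f x = 0)}"
      by (rule finite_set_of_finite_funs) (use fin in auto)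
  qed
  have pE: "\<kappa> \<in> proper_colourings V E \<longleftrightarrow> \<kappa> \<in> proper_colourings V (E - {{u,v}}) \<and> \<kappa> u \<noteq> \<kappa> v" for \<kappa>
  proof
    assume k: "\<kappa> \<in> proper_colourings V E"
    then have "\<kappa> u \<noteq> \<kappa> v" using e uv unfolding proper_colourings_def by blast
    then show "\<kappa> \<in> proper_colourings V (E - {{u,v}}) \<and> \<kappa> u \<noteq> \<kappa> v" using k unfolding proper_colourings_def by blast
  next
    assume k: "\<kappa> \<in> proper_colourings V (E - {{u,v}}) \<and> \<kappa> u \<noteq> \<kappa> v"
    have "\<forall>e'\<in>E. \<forall>x\<in>e'. \<forall>y\<in>e'. x \<noteq> y \<longrightarrow> \<kappa> x \<noteq> \<kappa> y"
    proof (intro ballI impI)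
      fix e' x y assume e': "e' \<in> E" "x \<in> e'" "y \<in> e'" "x \<noteq> y"
      show "\<kappa> x \<noteq> \<kappa> y"
      proof (cases "e' = {u,v}")
        case True
        then have "(x = u \<and> y = v) \<or> (x = v \<and> y = u)" using e' by auto
        then show ?thesis using k by auto
      next
        case False
        then have "e' \<in> E - {{u,v}}" using e' by simp
        then show ?thesis using k e' unfolding proper_colourings_def by blast
      qed
    qed
    then show "\<kappa> \<in> proper_colourings V E" using k unfolding proper_colourings_def by blast
  qed
  have TT1: "?T = {\<kappa>\<in>?T1. \<kappa> u \<noteq> \<kappa> v}" using pE by blast
  have split: "card ?T1 = card {\<kappa>\<in>?T1. \<kappa> u \<noteq> \<kappa> v} + card {\<kappa>\<in>?T1. \<kappa> u = \<kappa> v}"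
  proof -
    have "?T1 = {\<kappa>\<in>?T1. \<kappa> u \<noteq> \<kappa> v} \<union> {\<kappa>\<in>?T1. \<kappa> u = \<kappa> v}" by blast
    moreover have "{\<kappa>\<in>?T1. \<kappa> u \<noteq> \<kappa> v} \<inter> {\<kappa>\<in>?T1. \<kappa> u = \<kappa> v} = {}" by blast
    ultimately show ?thesis using finT1 by (metis (no_types, lifting) card_Un_disjoint finite_Un)
  qed
  have s1: "(\<kappa>(v := 0)) (s a) = \<kappa> a" if "\<kappa> u = \<kappa> v" for \<kappa> :: "'a \<Rightarrow> nat" and a
    using that uv by (simp add: s_def)
  have s2: "(\<kappa>(v := \<kappa> u)) a = \<kappa> (s a)" for \<kappa> :: "'a \<Rightarrow> nat" and a
    using uv by (simp add: s_def)
  have sinj: "s a \<noteq> s b" if "a \<in> e'" "b \<in> e'" "a \<noteq> b" "e' \<in> E" "e' \<noteq> {u,v}" for a b e'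
  proof
    assume sab: "s a = s b"
    have "e' = {a, b}"
    proof -
      have "card e' = 2" using Ee[OF that(4)] by simp
      then obtain p q where "e' = {p, q}" "p \<noteq> q" unfolding card_2_iff by blast
      then show ?thesis using that(1-3) by auto
    qed
    moreover have "(a = v \<and> b = u) \<or> (a = u \<and> b = v)" using sab that(3) uv(1) by (auto simp: s_def split: if_splits)
    ultimately show False using that(5) by auto
  qed
  have "bij_betw (\<lambda>\<kappa>. \<kappa>(v := 0)) {\<kappa>\<in>?T1. \<kappa> u = \<kappa> v} ?T3"
  proof (rule bij_betw_byWitness[where f'="\<lambda>\<kappa>. \<kappa>(v := \<kappa> u)"])
    show "\<forall>\<kappa>\<in>{\<kappa>\<in>?T1. \<kappa> u = \<kappa> v}. (\<kappa>(v := 0))(v := (\<kappa>(v := 0)) u) = \<kappa>"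
      using uv by (auto simp: fun_eq_iff)
    show "\<forall>\<kappa>\<in>?T3. (\<kappa>(v := \<kappa> u))(v := 0) = \<kappa>"
      by (auto simp: fun_eq_iff proper_colourings_def)
    show "(\<lambda>\<kappa>. \<kappa>(v := 0)) ` {\<kappa>\<in>?T1. \<kappa> u = \<kappa> v} \<subseteq> ?T3"
    proof
      fix \<kappa>' assume "\<kappa>' \<in> (\<lambda>\<kappa>. \<kappa>(v := 0)) ` {\<kappa>\<in>?T1. \<kappa> u = \<kappa> v}"
      then obtain \<kappa> where k: "\<kappa> \<in> ?T1" "\<kappa> u = \<kappa> v" and k': "\<kappa>' = \<kappa>(v := 0)" by blast
      have kp: "\<forall>x\<in>V. 1 \<le> \<kappa> x" "\<forall>x. x \<notin> V \<longrightarrow> \<kappa> x = 0"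
        "\<forall>e'\<in>E - {{u,v}}. \<forall>x\<in>e'. \<forall>y\<in>e'. x \<noteq> y \<longrightarrow> \<kappa> x \<noteq> \<kappa> y" "\<forall>x. \<kappa> x \<le> m"
        using k(1) unfolding proper_colourings_def by blast+
      have "\<forall>x\<in>V - {v}. 1 \<le> \<kappa>' x" using kp(1) by (simp add: k')
      moreover have "\<forall>x. x \<notin> V - {v} \<longrightarrow> \<kappa>' x = 0" using kp(2) by (simp add: k')
      moreover have "\<forall>f\<in>?C. \<forall>x\<in>f. \<forall>y\<in>f. x \<noteq> y \<longrightarrow> \<kappa>' x \<noteq> \<kappa>' y"
      proof (intro ballI impI)
        fix f x y assume f: "f \<in> ?C" and xy: "x \<in> f" "y \<in> f" "x \<noteq> y"
        obtain e' where e': "f = s ` e'" "e' \<in> E" "card (s ` e') = 2"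
          using f unfolding contract_edges_def s_def by blast
        obtain a b where ab: "a \<in> e'" "b \<in> e'" "x = s a" "y = s b" using e'(1) xy by blast
        have "a \<noteq> b" using ab xy(3) by blast
        have ne: "e' \<noteq> {u,v}"
        proof
          assume "e' = {u,v}"
          then have "s ` e' = {u}" using uv by (auto simp: s_def)
          then show False using e'(3) by simp
        qed
        then have "\<kappa> a \<noteq> \<kappa> b" using kp(3) e'(2) ab \<open>a \<noteq> b\<close> by blast
        then show "\<kappa>' x \<noteq> \<kappa>' y" unfolding ab k' using s1[OF k(2)] by simp
      qed
      moreover have "\<forall>x. \<kappa>' x \<le> m" using kp(4) by (simp add: k')
      ultimately show "\<kappa>' \<in> ?T3" unfolding proper_colourings_def by blast
    qed
    show "(\<lambda>\<kappa>. \<kappa>(v := \<kappa> u)) ` ?T3 \<subseteq> {\<kappa>\<in>?T1. \<kappa> u = \<kappa> v}"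
    proof
      fix \<kappa> assume "\<kappa> \<in> (\<lambda>\<kappa>. \<kappa>(v := \<kappa> u)) ` ?T3"
      then obtain \<kappa>' where k': "\<kappa>' \<in> ?T3" and k: "\<kappa> = \<kappa>'(v := \<kappa>' u)" by blast
      have k'p: "\<kappa>' \<in> proper_colourings (V - {v}) ?C" and k'm: "\<forall>x. \<kappa>' x \<le> m" using k' by simp_all
      have kp: "\<forall>x\<in>V - {v}. 1 \<le> \<kappa>' x" "\<forall>x. x \<notin> V - {v} \<longrightarrow> \<kappa>' x = 0"
        "\<forall>f\<in>?C. \<forall>x\<in>f. \<forall>y\<in>f. x \<noteq> y \<longrightarrow> \<kappa>' x \<noteq> \<kappa>' y" "\<forall>x. \<kappa>' x \<le> m"
        using k'p k'm unfolding proper_colourings_def mem_Collect_eq by simp_all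
      have "\<forall>x\<in>V. 1 \<le> \<kappa> x" using kp(1) uv by (simp add: k)
      moreover have "\<forall>x. x \<notin> V \<longrightarrow> \<kappa> x = 0" using kp(2) uv by (auto simp: k)
      moreover have "\<forall>e'\<in>E - {{u,v}}. \<forall>x\<in>e'. \<forall>y\<in>e'. x \<noteq> y \<longrightarrow> \<kappa> x \<noteq> \<kappa> y"
      proof (intro ballI impI)
        fix e' x y assume e': "e' \<in> E - {{u,v}}" and xy: "x \<in> e'" "y \<in> e'" "x \<noteq> y"
        have sxy: "s x \<noteq> s y" using sinj[OF xy] e' by blast
        have "s ` e' = {s x, s y}"
        proof -
          have "card e' = 2" using Ee e' by blast
          then obtain p q where "e' = {p, q}" "p \<noteq> q" unfolding card_2_iff by blast
          then show ?thesis using xy by auto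
        qed
        then have "card (s ` e') = 2" using sxy by simp
        then have "s ` e' \<in> ?C" using e' unfolding contract_edges_def s_def by blast
        then have "\<kappa>' (s x) \<noteq> \<kappa>' (s y)" using kp(3) sxy \<open>s ` e' = {s x, s y}\<close> by blast
        then show "\<kappa> x \<noteq> \<kappa> y" unfolding k s2 .
      qed
      moreover have "\<forall>x. \<kappa> x \<le> m" using kp(4) by (simp add: k)
      moreover have "\<kappa> u = \<kappa> v" using uv by (simp add: k)
      ultimately show "\<kappa> \<in> {\<kappa>\<in>?T1. \<kappa> u = \<kappa> v}" unfolding proper_colourings_def by blast
    qed
  qed
  then have "card {\<kappa>\<in>?T1. \<kappa> u = \<kappa> v} = card ?T3" by (rule bij_betw_same_card)
  then show ?thesis unfolding chi_def using split TT1 by simp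
qed



definition CP :: "'a set \<Rightarrow> 'a set set \<Rightarrow> rat poly" where
  "CP V E = (\<Sum>l\<in>partitions (card V). smult (path_coeffs V E l) ([:0,1:]^length l * [:-1,1:]^(card V - length l)))"

lemma CP_eval:
  assumes G: "simple_graph V E"
  shows "poly (CP V E) (of_nat m) = of_nat (chi V E m)"
proof -
  let ?P = "partitions (card V)" and ?a = "path_coeffs V E"
  have fin: "finite V" using G by (simp add: simple_graph_def)
  have exp: "\<And>\<alpha>. csf V E \<alpha> = (\<Sum>p\<in>?P. ?a p * XP p \<alpha>)" using path_coeffs_char[OF G] by blast
  have "of_nat (chi V E m) = (\<Sum>\<alpha>\<in>Aset (card V) m. csf V E \<alpha>)" by (rule chi_sum[OF fin])
  also have "\<dots> = (\<Sum>\<alpha>\<in>Aset (card V) m. \<Sum>p\<in>?P. ?a p * XP p \<alpha>)" by (simp add: exp)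
  also have "\<dots> = (\<Sum>p\<in>?P. \<Sum>\<alpha>\<in>Aset (card V) m. ?a p * XP p \<alpha>)" by (rule sum.swap)
  also have "\<dots> = (\<Sum>p\<in>?P. ?a p * (of_nat m ^ length p * (of_nat m - 1) ^ (card V - length p)))"
    by (rule sum.cong[OF refl]) (simp add: sum_distrib_left[symmetric] chi_path)
  also have "\<dots> = poly (CP V E) (of_nat m)"
    by (simp add: CP_def poly_sum)
  finally show ?thesis by simp
qed

lemma poly_eq_inf:
  fixes p q :: "rat poly"
  assumes S: "infinite S" and eq: "\<And>x. x \<in> S \<Longrightarrow> poly p x = poly q x"
  shows "p = q"
proof (rule ccontr)
  assume "p \<noteq> q"
  then have "p - q \<noteq> 0" by simp
  then have "finite {x. poly (p - q) x = 0}" by (rule poly_roots_finite)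
  moreover have "S \<subseteq> {x. poly (p - q) x = 0}" using eq by auto
  ultimately show False using S finite_subset by blast
qed

lemma infinite_nat_rat: "infinite (range (of_nat :: nat \<Rightarrow> rat))"
  by (simp add: finite_image_iff inj_on_def)

lemma infinite_ne1: "infinite {x::rat. x \<noteq> 1}"
proof -
  have "{x::rat. x \<noteq> 1} = UNIV - {1}" by auto
  moreover have "infinite (UNIV :: rat set)" by (rule infinite_UNIV_char_0)
  ultimately show ?thesis by simp
qed

lemma tree_eval:
  assumes G: "simple_graph V E" and x: "x \<noteq> 1"
  shows "poly (tree_poly V E) x = (x - 1)^card V * poly (CP V E) (x / (x - 1))"
proof -
  let ?P = "partitions (card V)" and ?a = "path_coeffs V E" and ?n = "card V"
  have x1: "x - 1 \<noteq> 0" using x by simp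
  have trm: "(x - 1)^?n * ((x / (x - 1))^length l * (x / (x - 1) - 1)^(?n - length l)) = x ^ length l"
    if l: "l \<in> ?P" for l
  proof -
    have ln: "length l \<le> ?n" by (rule partitions_len[OF l])
    have m1: "(x - 1) * (x / (x - 1)) = x" using x1 by simp
    have m2: "(x - 1) * (x / (x - 1) - 1) = 1" using x1 by (simp add: field_simps)
    have A: "(x - 1)^length l * (x / (x - 1))^length l = x ^ length l"
      by (simp only: power_mult_distrib[symmetric] m1)
    have B: "(x - 1)^(?n - length l) * (x / (x - 1) - 1)^(?n - length l) = 1"
      by (simp only: power_mult_distrib[symmetric] m2 power_one)
    have sp: "(x - 1)^?n = (x - 1)^length l * (x - 1)^(?n - length l)"
      using ln by (simp add: power_add[symmetric])
    have "(x - 1)^?n * ((x / (x - 1))^length l * (x / (x - 1) - 1)^(?n - length l))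
        = ((x - 1)^length l * (x / (x - 1))^length l) * ((x - 1)^(?n - length l) * (x / (x - 1) - 1)^(?n - length l))"
      unfolding sp by (simp only: mult_ac)
    also have "\<dots> = x ^ length l" unfolding A B by simp
    finally show ?thesis .
  qed
  have "(x - 1)^?n * poly (CP V E) (x / (x - 1))
      = (\<Sum>l\<in>?P. ?a l * ((x - 1)^?n * ((x / (x - 1))^length l * (x / (x - 1) - 1)^(?n - length l))))"
    by (simp add: CP_def poly_sum sum_distrib_left algebra_simps)
  also have "\<dots> = (\<Sum>l\<in>?P. ?a l * x ^ length l)"
    by (rule sum.cong[OF refl]) (simp add: trm)
  also have "\<dots> = poly (tree_poly V E) x"
    by (simp add: tree_poly_def poly_sum poly_monom)
  finally show ?thesis by simp
qed

theorem theorem4p2: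
  fixes V :: "'a set" and E :: "'a set set" and u v :: 'a
  assumes "simple_graph V E"
    and "{u, v} \<in> E"
  shows "tree_poly V E =
           tree_poly V (E - {{u, v}}) - [:-1, 1:] * tree_poly (V - {v}) (contract_edges E u v)"
proof -
  note G = assms(1) and e = assms(2)
  have G1: "simple_graph V (E - {{u, v}})" by (rule simple_delete[OF G])
  have G2: "simple_graph (V - {v}) (contract_edges E u v)" by (rule simple_contract[OF G e])
  have fin: "finite V" and Ee: "\<And>e'. e' \<in> E \<Longrightarrow> e' \<subseteq> V \<and> card e' = 2" using G by (auto simp: simple_graph_def)
  have uv: "u \<noteq> v" "u \<in> V" "v \<in> V" using Ee[OF e] by (auto simp: card_2_iff)
  have cV: "card (V - {v}) = card V - 1" using uv fin by simp
  have "V \<noteq> {}" using uv by blast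
  then have n1: "1 \<le> card V" using fin by (simp add: Suc_le_eq card_gt_0_iff)
  have CPeq: "CP V E = CP V (E - {{u, v}}) - CP (V - {v}) (contract_edges E u v)"
  proof (rule poly_eq_inf[OF infinite_nat_rat])
    fix y assume "y \<in> range (of_nat :: nat \<Rightarrow> rat)"
    then obtain m where y: "y = of_nat m" by blast
    show "poly (CP V E) y = poly (CP V (E - {{u, v}}) - CP (V - {v}) (contract_edges E u v)) y"
      unfolding y poly_diff CP_eval[OF G] CP_eval[OF G1] CP_eval[OF G2] dc_chi[OF G e] by simp
  qed
  show ?thesis
  proof (rule poly_eq_inf[OF infinite_ne1])
    fix x :: rat assume "x \<in> {x. x \<noteq> 1}"
    then have x: "x \<noteq> 1" by simp
    let ?y = "x / (x - 1)"
    have "poly (tree_poly V E) x = (x - 1)^card V * poly (CP V E) ?y" by (rule tree_eval[OF G x])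
    also have "\<dots> = (x - 1)^card V * poly (CP V (E - {{u, v}})) ?y
        - (x - 1) * ((x - 1)^(card V - 1) * poly (CP (V - {v}) (contract_edges E u v)) ?y)"
    proof -
      have "(x - 1)^card V = (x - 1) * (x - 1)^(card V - 1)" using n1
        by (metis One_nat_def Suc_diff_le diff_Suc_1 power_Suc)
      note pw = this
      have "(x - 1)^card V * poly (CP V E) ?y = (x - 1)^card V * (poly (CP V (E - {{u, v}})) ?y - poly (CP (V - {v}) (contract_edges E u v)) ?y)"
        by (simp only: CPeq poly_diff)
      also have "\<dots> = (x - 1)^card V * poly (CP V (E - {{u, v}})) ?y - (x - 1)^card V * poly (CP (V - {v}) (contract_edges E u v)) ?y"
        by (rule right_diff_distrib)
      also have "\<dots> = (x - 1)^card V * poly (CP V (E - {{u, v}})) ?y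
        - (x - 1) * ((x - 1)^(card V - 1) * poly (CP (V - {v}) (contract_edges E u v)) ?y)"
        unfolding pw by (simp only: mult.assoc)
      finally show ?thesis .
    qed
    also have "\<dots> = poly (tree_poly V (E - {{u, v}})) x - (x - 1) * poly (tree_poly (V - {v}) (contract_edges E u v)) x"
      using tree_eval[OF G1 x] tree_eval[OF G2 x] cV by simp
    also have "\<dots> = poly (tree_poly V (E - {{u, v}}) - [:-1, 1:] * tree_poly (V - {v}) (contract_edges E u v)) x"
      by (simp add: algebra_simps)
    finally show "poly (tree_poly V E) x = poly (tree_poly V (E - {{u, v}}) - [:-1, 1:] * tree_poly (V - {v}) (contract_edges E u v)) x" .
  qed
qed


end
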